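(* Let $\mathbf{k}$ be a commutative ring, $n\ge0$, and $w,u\in S_n$. Set $\beta:=\operatorname{cLRM}'(w)$ and $\gamma:=\operatorname{cLRM}'(u)$. Then: (a) $[\underline{w}](\mathbf{V}_\beta\mathbf{B}_\beta w)=1$. (b) If $u\neq w$, then $[\underline{w}](\mathbf{V}_\beta\mathbf{B}_\gamma u)=0$ unless $\widetilde{\beta}\prec_\pi\widetilde{\gamma}$.
   Context: $S_n$ is the symmetric group on $[n]$, with product $(uw)(i)=u(w(i))$; $\operatorname{Des}(u)=\{i\in[n-1]:u(i)>u(i+1)\}$; for $I\subseteq[n-1]$, $\mathbf{B}_I=\sum_{u\in S_n,\ \operatorname{Des}(u)\subseteq I}u\in\mathbf{k}[S_n]$. For a composition $\alpha=(\alpha_1,\dots,\alpha_p)$ of $n$, $\operatorname{Set}(\alpha)=\{\alpha_1,\alpha_1+\alpha_2,\dots,\alpha_1+\cdots+\alpha_{p-1}\}$, $\mathbf{B}_\alpha:=\mathbf{B}_{\operatorname{Set}(\alpha)}$, $\alpha_{\le i}=\alpha_1+\cdots+\alpha_i$, and $\operatorname{Set}(\alpha)_i=\{\alpha_{\le i-1}+1,\dots,\alpha_{\le i}\}$; $\operatorname{Comp}$ is the inverse bijection of $\operatorname{Set}$ from subsets of $[n-1]$ to compositions of $n$. $\operatorname{LRM}(w)=\{i\in[n]: w(k)>i\text{ for all }k<w^{-1}(i)\}$, $\operatorname{LRM}'(w)=\{\ell-1:\ell\in\operatorname{LRM}(w),\ \ell>1\}$, $\operatorname{cLRM}'(w)=\operatorname{Comp}(\operatorname{LRM}'(w))$.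 $\widetilde\alpha$ is the partition obtained by sorting the parts of $\alpha$ weakly decreasingly. For partitions $\lambda=(\lambda_1,\dots,\lambda_k)$, $\mu=(\mu_1,\dots,\mu_l)$ of $n$, $\lambda\preceq_\pi\mu$ means there is $f:[k]\to[l]$ with $\mu_j=\sum_{i\in f^{-1}(j)}\lambda_i$ for all $j$; $\lambda\prec_\pi\mu$ means $\lambda\preceq_\pi\mu$ and $\lambda\neq\mu$. $F_n$ is the free associative $\mathbf{k}$-algebra on letters $\underline1,\dots,\underline n$ and $F_{n,n}$ its span of words of length $n$; $S_n$ acts on $F_{n,n}$ from the right by $(\underline{w_1}\cdots\underline{w_n})\cdot\sigma=\underline{w_{\sigma(1)}}\cdots\underline{w_{\sigma(n)}}$, extended to a right $\mathbf{k}[S_n]$-action. For $\sigma\in S_n$, $\underline{\sigma}:=\underline{\sigma(1)}\cdots\underline{\sigma(n)}$. For $a\in F_n$ and a word $\mathfrak w$, $[\mathfrak w](a)$ is the coefficient of $\mathfrak w$ in $a$. $[a,b]=ab-ba$; for nonempty $S\subseteq[n]$ with elements $s_1<\cdots<s_k$, $V^S=[[\cdots[\underline{s_1},\underline{s_2}],\dots],\underline{s_k}]$; $\mathbf{V}_\alpha=V^{\operatorname{Set}(\alpha)_1}\cdots V^{\operatorname{Set}(\alpha)_p}$. Expressions like $\mathbf{V}_\beta\mathbf{B}_\gamma u$ mean the right action of $\mathbf{B}_\gamma u\in\mathbf{k}[S_n]$ on $\mathbf{V}_\beta$. *)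

theory Defs
  imports "HOL-Combinatorics.Permutations"
begin

text \<open>Permutations of [n] are functions nat => nat with  w permutes {1..n}.
  Product (uw)(i) = u(w(i)) is composition  u o w.\<close>

definition perms :: "nat \<Rightarrow> (nat \<Rightarrow> nat) set" where
  "perms n = {w. w permutes {1..n}}"

definition Des :: "nat \<Rightarrow> (nat \<Rightarrow> nat) \<Rightarrow> nat set" where
  "Des n u = {i \<in> {1..n-1}. u i > u (Suc i)}"

definition LRM :: "nat \<Rightarrow> (nat \<Rightarrow> nat) \<Rightarrow> nat set" where
  "LRM n w = {i \<in> {1..n}. \<forall>k. 1 \<le> k \<and> k < inv w i \<longrightarrow> w k > i}"

definition LRM' :: "nat \<Rightarrow> (nat \<Rightarrow> nat) \<Rightarrow> nat set" where
  "LRM' n w = {l - 1 | l. l \<in> LRM n w \<and> l > 1}"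

text \<open>A composition of n is a list of positive naturals summing to n.\<close>

definition psum :: "nat list \<Rightarrow> nat \<Rightarrow> nat" where
  "psum \<alpha> i = sum_list (take i \<alpha>)"

definition SetC :: "nat list \<Rightarrow> nat set" where
  "SetC \<alpha> = {psum \<alpha> i | i. 1 \<le> i \<and> i < length \<alpha>}"

definition block :: "nat list \<Rightarrow> nat \<Rightarrow> nat set" where
  "block \<alpha> i = {psum \<alpha> (i - 1) + 1 .. psum \<alpha> i}"  \<comment> \<open>Set(alpha)_i, 1-indexed\<close>

text \<open>Comp: inverse of SetC, from subsets of [n-1] to compositions of n.\<close>
definition Comp :: "nat \<Rightarrow> nat set \<Rightarrow> nat list" where
  "Comp n I = (if n = 0 then [] else
     (let s = [0] @ sorted_list_of_set I @ [n]
      in map (\<lambda>i. s ! Suc i - s ! i) [0..<length s - 1]))"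

definition cLRM' :: "nat \<Rightarrow> (nat \<Rightarrow> nat) \<Rightarrow> nat list" where
  "cLRM' n w = Comp n (LRM' n w)"

definition sortdec :: "nat list \<Rightarrow> nat list" where
  "sortdec \<alpha> = rev (sort \<alpha>)"

definition pi_le :: "nat list \<Rightarrow> nat list \<Rightarrow> bool" where
  "pi_le lam mu = (\<exists>f :: nat \<Rightarrow> nat. (\<forall>i < length lam. f i < length mu) \<and>
      (\<forall>j < length mu. mu ! j = (\<Sum>i \<in> {i. i < length lam \<and> f i = j}. lam ! i)))"

definition pi_less :: "nat list \<Rightarrow> nat list \<Rightarrow> bool" where
  "pi_less lam mu = (pi_le lam mu \<and> lam \<noteq> mu)"

text \<open>An element of the free algebra F_n is represented by its coefficient function on
  words (lists of letters). [w](a) is just  a w.\<close>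

type_synonym 'k ncpoly = "nat list \<Rightarrow> 'k"

definition nc_one :: "'k::comm_ring_1 ncpoly" where
  "nc_one = (\<lambda>x. if x = [] then 1 else 0)"

definition letter :: "nat \<Rightarrow> 'k::comm_ring_1 ncpoly" where
  "letter i = (\<lambda>x. if x = [i] then 1 else 0)"

definition nc_mult :: "'k::comm_ring_1 ncpoly \<Rightarrow> 'k ncpoly \<Rightarrow> 'k ncpoly" where
  "nc_mult a b = (\<lambda>x. \<Sum>i \<le> length x. a (take i x) * b (drop i x))"

definition bracket :: "'k::comm_ring_1 ncpoly \<Rightarrow> 'k ncpoly \<Rightarrow> 'k ncpoly" where
  "bracket a b = (\<lambda>x. nc_mult a b x - nc_mult b a x)"

definition VS :: "nat set \<Rightarrow> 'k::comm_ring_1 ncpoly" where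
  "VS S = (let xs = sorted_list_of_set S in
     foldl (\<lambda>acc s. bracket acc (letter s)) (letter (hd xs)) (tl xs))"

definition Vcomp :: "nat list \<Rightarrow> 'k::comm_ring_1 ncpoly" where
  "Vcomp \<alpha> = foldr nc_mult (map (\<lambda>i. VS (block \<alpha> i)) [1..<Suc (length \<alpha>)]) nc_one"

text \<open>Right action of S_n on words of length n:
  (w_1...w_n).sigma = w_{sigma(1)}...w_{sigma(n)}.\<close>
definition word_act :: "nat list \<Rightarrow> (nat \<Rightarrow> nat) \<Rightarrow> nat list" where
  "word_act x \<sigma> = map (\<lambda>i. x ! (\<sigma> (Suc i) - 1)) [0..<length x]"

text \<open>Coefficients of a.sigma for a in F_{n,n}: the coefficient of word x (of length n)
  in a.sigma is the coefficient of x.sigma^{-1} in a.\<close>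
definition act :: "nat \<Rightarrow> 'k::comm_ring_1 ncpoly \<Rightarrow> (nat \<Rightarrow> nat) \<Rightarrow> 'k ncpoly" where
  "act n a \<sigma> = (\<lambda>x. if length x = n then a (word_act x (inv \<sigma>)) else 0)"

text \<open>Right action of B_I u = sum over v in S_n with Des(v) subset I of v u.\<close>
definition actBu :: "nat \<Rightarrow> 'k::comm_ring_1 ncpoly \<Rightarrow> nat set \<Rightarrow> (nat \<Rightarrow> nat) \<Rightarrow> 'k ncpoly" where
  "actBu n a I u = (\<lambda>x. \<Sum>v \<in> {v \<in> perms n. Des n v \<subseteq> I}. act n a (v \<circ> u) x)"

definition underline :: "nat \<Rightarrow> (nat \<Rightarrow> nat) \<Rightarrow> nat list" where
  "underline n \<sigma> = map \<sigma> [1..<Suc n]"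

end

theory Submission
  imports Defs
begin


lemma nc_mult_letter_right:
  "nc_mult a (letter s) y = (if y \<noteq> [] \<and> last y = s then a (butlast y) else 0)"
proof -
  have eq: "(drop i y = [s]) = (y \<noteq> [] \<and> i = length y - 1 \<and> last y = s)" if "i \<le> length y" for i
  proof
    assume h: "drop i y = [s]"
    then have "length (drop i y) = 1" by simp
    then have "i = length y - 1" by simp
    moreover have "y \<noteq> []" using h by auto
    moreover have "y = take i y @ [s]" using h by (metis append_take_drop_id)
    then have "last y = s" by (metis last_snoc)
    ultimately show "y \<noteq> [] \<and> i = length y - 1 \<and> last y = s" by blast
  next
    assume "y \<noteq> [] \<and> i = length y - 1 \<and> last y = s"
    then show "drop i y = [s]"
    proof -
      assume a: "y \<noteq> [] \<and> i = length y - 1 \<and> last y = s"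
      then have "y = butlast y @ [s]" by (metis append_butlast_last_id)
      moreover have "i = length (butlast y)" using a by simp
      ultimately show ?thesis by (metis append_eq_conv_conj)
    qed
  qed
  have "nc_mult a (letter s) y = (\<Sum>i\<le>length y. if i = length y - 1 then (if y \<noteq> [] \<and> last y = s then a (take i y) else 0) else 0)"
    unfolding nc_mult_def letter_def
    by (rule sum.cong) (auto simp: eq)
  also have "\<dots> = (if y \<noteq> [] \<and> last y = s then a (take (length y - 1) y) else 0)"
    by (simp add: sum.delta)
  finally show ?thesis by (simp add: butlast_conv_take)
qed

lemma nc_mult_letter_left:
  "nc_mult (letter s) a y = (if y \<noteq> [] \<and> hd y = s then a (tl y) else 0)"
proof -
  have eq: "(take i y = [s]) = (y \<noteq> [] \<and> i = 1 \<and> hd y = s)" if "i \<le> length y" for i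
  proof
    assume h: "take i y = [s]"
    then have "length (take i y) = 1" by simp
    then have "i = 1" using that by simp
    then show "y \<noteq> [] \<and> i = 1 \<and> hd y = s" using h by (cases y) auto
  next
    assume "y \<noteq> [] \<and> i = 1 \<and> hd y = s"
    then show "take i y = [s]" by (cases y) auto
  qed
  have "nc_mult (letter s) a y = (\<Sum>i\<le>length y. if i = 1 then (if y \<noteq> [] \<and> hd y = s then a (drop i y) else 0) else 0)"
    unfolding nc_mult_def letter_def
    by (rule sum.cong) (auto simp: eq)
  also have "\<dots> = (if y \<noteq> [] \<and> hd y = s then a (drop 1 y) else 0)"
  proof -
    have "(\<Sum>i\<le>length y. if i = 1 then (if y \<noteq> [] \<and> hd y = s then a (drop i y) else 0) else 0)
        = (if 1 \<in> {..length y} then (if y \<noteq> [] \<and> hd y = s then a (drop 1 y) else 0) else 0)"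
      by (rule sum.delta) simp
    also have "\<dots> = (if y \<noteq> [] \<and> hd y = s then a (drop 1 y) else 0)"
      by (cases y) auto
    finally show ?thesis .
  qed
  finally show ?thesis by (simp add: drop_Suc)
qed

definition vw :: "nat list \<Rightarrow> nat set \<Rightarrow> nat list" where
  "vw xs L = rev (filter (\<lambda>x. x \<in> L) xs) @ filter (\<lambda>x. x \<notin> L) xs"

lemma sum_if_const:
  "(\<Sum>L\<in>A. if P \<and> Q L then f L else 0) = (if P then (\<Sum>L\<in>A. if Q L then f L else 0) else 0)"
  by auto

lemma foldl_char:
  assumes "sorted_wrt (<) xs" "xs \<noteq> []"
  shows "foldl (\<lambda>acc s. bracket acc (letter s)) (letter (hd xs)) (tl xs) y =
     (\<Sum>L\<in>Pow (set xs - {hd xs}). if y = vw xs L then (-1)^card L else (0::'k::comm_ring_1))"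
  using assms
proof (induction xs arbitrary: y rule: rev_induct)
  case Nil
  then show ?case by simp
next
  case (snoc x xs)
  show ?case
  proof (cases "xs = []")
    case True
    then show ?thesis by (simp add: letter_def vw_def)
  next
    case False
    let ?F = "\<lambda>acc s. bracket acc (letter s)"
    let ?P = "foldl ?F (letter (hd xs)) (tl xs) :: 'k ncpoly"
    have sx: "sorted_wrt (<) xs" and lt: "\<forall>z\<in>set xs. z < x" using snoc.prems by (auto simp: sorted_wrt_append)
    have IH: "\<And>y. ?P y = (\<Sum>L\<in>Pow (set xs - {hd xs}). if y = vw xs L then (-1)^card L else 0)"
      using snoc.IH[OF sx False] .
    define A where "A = set xs - {hd xs}"
    have xA: "x \<notin> A" using lt A_def by auto
    have xxs: "x \<notin> set xs" using lt by auto
    have hd: "hd (xs @ [x]) = hd xs" "tl (xs @ [x]) = tl xs @ [x]" using False by auto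
    have lhs: "foldl ?F (letter (hd (xs @ [x]))) (tl (xs @ [x])) y =
       (if y \<noteq> [] \<and> last y = x then ?P (butlast y) else 0) - (if y \<noteq> [] \<and> hd y = x then ?P (tl y) else 0)"
      unfolding hd by (simp add: bracket_def nc_mult_letter_right nc_mult_letter_left)
    have setx: "set (xs @ [x]) - {hd (xs @ [x])} = insert x A"
      using False xxs hd A_def by (cases xs) auto
    have finA: "finite A" unfolding A_def by simp
    have disj: "Pow A \<inter> insert x ` Pow A = {}" using xA by auto
    have inj: "inj_on (insert x) (Pow A)" using xA by (auto simp: inj_on_def)
    have vw1: "vw (xs @ [x]) L = vw xs L @ [x]" if "L \<in> Pow A" for L
    proof -
      have "x \<notin> L" using that xA by blast
      then show ?thesis by (simp add: vw_def)
    qed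
    have vw2: "vw (xs @ [x]) (insert x L) = x # vw xs L" if "L \<in> Pow A" for L
    proof -
      have "filter (\<lambda>z. z \<in> insert x L) xs = filter (\<lambda>z. z \<in> L) xs"
        using xxs by (intro filter_cong) auto
      moreover have "filter (\<lambda>z. z \<notin> insert x L) xs = filter (\<lambda>z. z \<notin> L) xs"
        using xxs by (intro filter_cong) auto
      ultimately show ?thesis by (simp add: vw_def)
    qed
    have c2: "card (insert x L) = Suc (card L)" if "L \<in> Pow A" for L
    proof -
      have "x \<notin> L" "finite L" using that xA finA by (auto intro: finite_subset)
      then show ?thesis by simp
    qed
    have S: "(\<Sum>L\<in>Pow (set (xs @ [x]) - {hd (xs @ [x])}). if y = vw (xs @ [x]) L then (-1)^card L else (0::'k))
       = (\<Sum>L\<in>Pow A. if y = vw (xs @ [x]) L then (-1)^card L else 0)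
       + (\<Sum>L\<in>insert x ` Pow A. if y = vw (xs @ [x]) L then (-1)^card L else 0)"
      unfolding setx Pow_insert using finA disj by (intro sum.union_disjoint) auto
    have S2: "(\<Sum>L\<in>insert x ` Pow A. if y = vw (xs @ [x]) L then (-1)^card L else (0::'k))
       = (\<Sum>L\<in>Pow A. if y = x # vw xs L then - ((-1)^card L) else 0)"
      by (subst sum.reindex[OF inj]) (auto intro!: sum.cong simp: vw2 c2)
    have S1: "(\<Sum>L\<in>Pow A. if y = vw (xs @ [x]) L then (-1)^card L else (0::'k))
       = (\<Sum>L\<in>Pow A. if y = vw xs L @ [x] then (-1)^card L else 0)"
      by (auto intro!: sum.cong simp: vw1)
    have S3: "(\<Sum>L\<in>Pow A. if y = vw xs L @ [x] then (-1)^card L else (0::'k))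
       = (if y \<noteq> [] \<and> last y = x then ?P (butlast y) else 0)"
    proof -
      have "\<And>L. (y = vw xs L @ [x]) = ((y \<noteq> [] \<and> last y = x) \<and> butlast y = vw xs L)"
        by (metis append_butlast_last_id butlast_snoc last_snoc snoc_eq_iff_butlast)
      then show ?thesis by (simp only: sum_if_const IH A_def)
    qed
    have S4: "(\<Sum>L\<in>Pow A. if y = x # vw xs L then - ((-1)^card L) else (0::'k))
       = - (if y \<noteq> [] \<and> hd y = x then ?P (tl y) else 0)"
    proof -
      have e1: "\<And>L. (y = x # vw xs L) = ((y \<noteq> [] \<and> hd y = x) \<and> tl y = vw xs L)"
        by (cases y) auto
      have e2: "(\<Sum>L\<in>Pow A. if tl y = vw xs L then - ((-1)^card L) else (0::'k))
           = - (\<Sum>L\<in>Pow A. if tl y = vw xs L then ((-1)^card L) else (0::'k))"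
          unfolding sum_negf[symmetric] by (rule sum.cong) auto
      show ?thesis
        apply (simp only: e1 sum_if_const e2)
        apply (simp only: IH A_def)
        by simp
    qed
    show ?thesis
      apply (subst lhs)
      apply (subst S)
      apply (subst S1)
      apply (subst S2)
      apply (subst S3)
      apply (subst S4)
      by simp
  qed
qed


definition vword :: "nat set \<Rightarrow> nat set \<Rightarrow> nat list" where
  "vword S L = vw (sorted_list_of_set S) L"

lemma VS_char:
  assumes "finite S" "S \<noteq> {}"
  shows "(VS S :: 'k::comm_ring_1 ncpoly) y = (\<Sum>L\<in>Pow (S - {Min S}). if y = vword S L then (-1)^card L else 0)"
proof -
  let ?xs = "sorted_list_of_set S"
  have ne: "?xs \<noteq> []" using assms by simp
  have hd: "hd ?xs = Min S" using sorted_list_of_set_nonempty[OF assms] by simp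
  have "(VS S :: 'k ncpoly) y = foldl (\<lambda>acc s. bracket acc (letter s)) (letter (hd ?xs)) (tl ?xs) y"
    by (simp add: VS_def Let_def)
  also have "\<dots> = (\<Sum>L\<in>Pow (set ?xs - {hd ?xs}). if y = vw ?xs L then (-1)^card L else 0)"
    by (rule foldl_char[OF strict_sorted_list_of_set ne])
  finally show ?thesis using assms by (simp add: hd vword_def)
qed

lemma length_vw: "length (vw xs L) = length xs"
  by (simp add: vw_def sum_length_filter_compl)

lemma length_vword: "finite S \<Longrightarrow> length (vword S L) = card S"
  by (simp add: vword_def length_vw)

lemma VS_hom:
  assumes "finite S" "S \<noteq> {}" "length y \<noteq> card S"
  shows "(VS S :: 'k::comm_ring_1 ncpoly) y = 0"
  unfolding VS_char[OF assms(1,2)]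
  by (rule sum.neutral) (use assms length_vword in auto)

lemma nc_mult_hom:
  assumes "\<And>x. length x \<noteq> d \<Longrightarrow> a x = 0"
  shows "nc_mult a b y = (if d \<le> length y then a (take d y) * b (drop d y) else 0)"
proof -
  have "nc_mult a b y = (\<Sum>i\<le>length y. if i = d then a (take i y) * b (drop i y) else 0)"
    unfolding nc_mult_def
  proof (rule sum.cong)
    fix i assume "i \<in> {..length y}"
    then have "length (take i y) = i" by simp
    then show "a (take i y) * b (drop i y) = (if i = d then a (take i y) * b (drop i y) else 0)"
      using assms by auto
  qed simp
  also have "\<dots> = (if d \<in> {..length y} then a (take d y) * b (drop d y) else 0)"
    by (rule sum.delta) simp
  finally show ?thesis by simp
qed

lemma foldr_hom:
  "length ds = length Fs \<Longrightarrow> (\<forall>i<length Fs. \<forall>x. length x \<noteq> ds!i \<longrightarrow> (Fs!i) x = 0) \<Longrightarrow>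
   foldr nc_mult Fs nc_one y = (if length y = sum_list ds then
      (\<Prod>i<length Fs. (Fs!i) (take (ds!i) (drop (sum_list (take i ds)) y))) else (0::'k::comm_ring_1))"
proof (induction Fs arbitrary: ds y)
  case Nil
  then show ?case by (simp add: nc_one_def)
next
  case (Cons F Fs)
  obtain d ds' where ds: "ds = d # ds'" using Cons.prems(1) by (cases ds) auto
  have lenF: "length ds' = length Fs" using Cons.prems(1) ds by simp
  have homF: "\<And>x. length x \<noteq> d \<Longrightarrow> F x = 0" using Cons.prems(2) ds by force
  have homFs: "\<forall>i<length Fs. \<forall>x. length x \<noteq> ds'!i \<longrightarrow> (Fs!i) x = 0"
    using Cons.prems(2) ds by force
  have "foldr nc_mult (F # Fs) nc_one y = nc_mult F (foldr nc_mult Fs nc_one) y" by simp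
  also have "\<dots> = (if d \<le> length y then F (take d y) * foldr nc_mult Fs nc_one (drop d y) else 0)"
    by (rule nc_mult_hom[OF homF])
  also have "\<dots> = (if d \<le> length y then F (take d y) *
      (if length (drop d y) = sum_list ds' then
      (\<Prod>i<length Fs. (Fs!i) (take (ds'!i) (drop (sum_list (take i ds')) (drop d y)))) else 0) else 0)"
    using Cons.IH[OF lenF homFs] by simp
  also have "\<dots> = (if length y = sum_list ds then
      (\<Prod>i<length (F # Fs). ((F # Fs)!i) (take (ds!i) (drop (sum_list (take i ds)) y))) else 0)"
  proof -
    have dd: "\<And>i. drop (sum_list (take i ds')) (drop d y) = drop (sum_list (take (Suc i) ds)) y"
      by (simp add: ds add.commute)
    have "(\<Prod>i<length (F # Fs). ((F # Fs)!i) (take (ds!i) (drop (sum_list (take i ds)) y)))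
       = F (take d y) * (\<Prod>i<length Fs. (Fs!i) (take (ds'!i) (drop (sum_list (take i ds')) (drop d y))))"
      by (simp only: length_Cons prod.lessThan_Suc_shift dd) (simp add: ds)
    moreover have "(d \<le> length y \<and> length (drop d y) = sum_list ds') = (length y = sum_list ds)"
      by (auto simp: ds)
    ultimately show ?thesis by auto
  qed
  finally show ?case .
qed

lemma concat_chunks:
  "(y = concat ws) = (length y = sum_list (map length ws) \<and>
     (\<forall>i<length ws. take (length (ws!i)) (drop (sum_list (take i (map length ws))) y) = ws!i))"
proof (induction ws arbitrary: y)
  case Nil
  then show ?case by simp
next
  case (Cons w ws)
  have "(y = concat (w # ws)) = (take (length w) y = w \<and> drop (length w) y = concat ws)"
    by (metis append_eq_conv_conj concat.simps(2))
  also have "\<dots> = (take (length w) y = w \<and> length (drop (length w) y) = sum_list (map length ws) \<and>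
     (\<forall>i<length ws. take (length (ws!i)) (drop (sum_list (take i (map length ws))) (drop (length w) y)) = ws!i))"
    using Cons.IH by blast
  also have "\<dots> = (length y = sum_list (map length (w # ws)) \<and>
     (\<forall>i<length (w # ws). take (length ((w # ws)!i)) (drop (sum_list (take i (map length (w # ws)))) y) = (w # ws)!i))"
  proof -
    have dd: "\<And>i. drop (sum_list (take i (map length ws))) (drop (length w) y) = drop (sum_list (take (Suc i) (map length (w # ws)))) y"
      by (simp add: add.commute)
    have "(take (length w) y = w \<and> length (drop (length w) y) = sum_list (map length ws)) =
          (take (length w) y = w \<and> length y = sum_list (map length (w # ws)))"
    proof -
      have "length w \<le> length y" if "take (length w) y = w"
      proof -
        have "length (take (length w) y) = length w" using that by simp
        then show ?thesis by (simp add: min_def split: if_splits)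
      qed
      then show ?thesis by auto
    qed
    then show ?thesis by (simp only: length_Cons All_less_Suc2 dd) auto
  qed
  finally show ?case .
qed

lemma prod_sum_Pow:
  fixes h :: "'i \<Rightarrow> 'a set \<Rightarrow> 'k::comm_semiring_1"
  assumes "finite I" "\<forall>i\<in>I. finite (N i)" "disjoint_family_on N I"
  shows "(\<Prod>i\<in>I. \<Sum>L\<in>Pow (N i). h i L) = (\<Sum>L\<in>Pow (\<Union>i\<in>I. N i). \<Prod>i\<in>I. h i (L \<inter> N i))"
  using assms
proof (induction I rule: finite_induct)
  case empty
  then show ?case by simp
next
  case (insert a I)
  define M where "M = (\<Union>i\<in>I. N i)"
  have dfI: "disjoint_family_on N I" using insert.prems(2) by (auto simp: disjoint_family_on_def)
  have IH: "(\<Prod>i\<in>I. \<Sum>L\<in>Pow (N i). h i L) = (\<Sum>L\<in>Pow M. \<Prod>i\<in>I. h i (L \<inter> N i))"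
    using insert.IH insert.prems dfI M_def by auto
  have disj: "N a \<inter> M = {}" using insert.prems(2) insert.hyps(2) unfolding M_def disjoint_family_on_def by fastforce
  have disj2: "\<And>i. i \<in> I \<Longrightarrow> N a \<inter> N i = {}" using disj M_def by auto
  have finM: "finite M" using insert.prems(1) insert.hyps(1) M_def by auto
  have finNa: "finite (N a)" using insert.prems(1) by auto
  have bij: "bij_betw (\<lambda>p. fst p \<union> snd p) (Pow (N a) \<times> Pow M) (Pow (N a \<union> M))"
  proof (rule bij_betw_byWitness[where f' = "\<lambda>L. (L \<inter> N a, L \<inter> M)"])
    show "\<forall>p\<in>Pow (N a) \<times> Pow M. ((fst p \<union> snd p) \<inter> N a, (fst p \<union> snd p) \<inter> M) = p"
      using disj by auto
    show "\<forall>L\<in>Pow (N a \<union> M). fst (L \<inter> N a, L \<inter> M) \<union> snd (L \<inter> N a, L \<inter> M) = L"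
      by auto
    show "(\<lambda>p. fst p \<union> snd p) ` (Pow (N a) \<times> Pow M) \<subseteq> Pow (N a \<union> M)" by auto
    show "(\<lambda>L. (L \<inter> N a, L \<inter> M)) ` Pow (N a \<union> M) \<subseteq> Pow (N a) \<times> Pow M" by auto
  qed
  have "(\<Prod>i\<in>insert a I. \<Sum>L\<in>Pow (N i). h i L) = (\<Sum>L\<in>Pow (N a). h a L) * (\<Sum>L\<in>Pow M. \<Prod>i\<in>I. h i (L \<inter> N i))"
    using insert.hyps IH by simp
  also have "\<dots> = (\<Sum>p\<in>Pow (N a) \<times> Pow M. h a (fst p) * (\<Prod>i\<in>I. h i (snd p \<inter> N i)))"
    by (subst sum_product, subst sum.cartesian_product) (simp add: split_def)
  also have "\<dots> = (\<Sum>p\<in>Pow (N a) \<times> Pow M. h a ((fst p \<union> snd p) \<inter> N a) * (\<Prod>i\<in>I. h i ((fst p \<union> snd p) \<inter> N i)))"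
  proof (rule sum.cong)
    fix p assume p: "p \<in> Pow (N a) \<times> Pow M"
    then have "(fst p \<union> snd p) \<inter> N a = fst p" using disj by auto
    moreover have "(fst p \<union> snd p) \<inter> N i = snd p \<inter> N i" if "i \<in> I" for i
      using p disj2[OF that] by auto
    ultimately show "h a (fst p) * (\<Prod>i\<in>I. h i (snd p \<inter> N i)) =
       h a ((fst p \<union> snd p) \<inter> N a) * (\<Prod>i\<in>I. h i ((fst p \<union> snd p) \<inter> N i))"
      by simp
  qed simp
  also have "\<dots> = (\<Sum>L\<in>Pow (N a \<union> M). h a (L \<inter> N a) * (\<Prod>i\<in>I. h i (L \<inter> N i)))"
    by (rule sum.reindex_bij_betw[OF bij])
  also have "\<dots> = (\<Sum>L\<in>Pow (\<Union>i\<in>insert a I. N i). \<Prod>i\<in>insert a I. h i (L \<inter> N i))"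
    using insert.hyps by (simp add: M_def)
  finally show ?case .
qed


definition cnt :: "nat set \<Rightarrow> nat \<Rightarrow> nat" where
  "cnt I x = card {i\<in>I. i < x}"

definition Bk :: "nat list \<Rightarrow> nat \<Rightarrow> nat set" where
  "Bk \<alpha> i = block \<alpha> (Suc i)"

definition NN :: "nat list \<Rightarrow> nat set" where
  "NN \<alpha> = (\<Union>i<length \<alpha>. Bk \<alpha> i - {Min (Bk \<alpha> i)})"

definition W :: "nat list \<Rightarrow> nat set \<Rightarrow> nat list" where
  "W \<alpha> L = concat (map (\<lambda>i. vword (Bk \<alpha> i) L) [0..<length \<alpha>])"

lemma psum_Suc: "i < length \<alpha> \<Longrightarrow> psum \<alpha> (Suc i) = psum \<alpha> i + \<alpha>!i"
  by (simp add: psum_def take_Suc_conv_app_nth)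

lemma psum_0[simp]: "psum \<alpha> 0 = 0"
  by (simp add: psum_def)

lemma psum_len: "psum \<alpha> (length \<alpha>) = sum_list \<alpha>"
  by (simp add: psum_def)

lemma psum_mono: "i \<le> j \<Longrightarrow> psum \<alpha> i \<le> psum \<alpha> j"
proof -
  assume "i \<le> j"
  then obtain d where "j = i + d" using le_Suc_ex by blast
  then have "take j \<alpha> = take i \<alpha> @ take d (drop i \<alpha>)" by (simp add: take_add)
  then show ?thesis by (simp add: psum_def)
qed

lemma psum_strict:
  assumes pos: "\<forall>x\<in>set \<alpha>. 0 < x" and "i < j" "j \<le> length \<alpha>"
  shows "psum \<alpha> i < psum \<alpha> j"
proof -
  have "psum \<alpha> i \<le> psum \<alpha> (j - 1)" using assms by (intro psum_mono) simp
  moreover have "psum \<alpha> j = psum \<alpha> (j - 1) + \<alpha>!(j-1)"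
    using psum_Suc[of "j-1" \<alpha>] assms by simp
  moreover have "\<alpha>!(j-1) > 0" using pos assms by simp
  ultimately show ?thesis by simp
qed

lemma Bk_eq: "Bk \<alpha> i = {psum \<alpha> i + 1 .. psum \<alpha> (Suc i)}"
  by (simp add: Bk_def block_def)

lemma card_Bk: "i < length \<alpha> \<Longrightarrow> card (Bk \<alpha> i) = \<alpha>!i"
  by (simp add: Bk_eq psum_Suc)

lemma finite_Bk[simp]: "finite (Bk \<alpha> i)"
  by (simp add: Bk_eq)

lemma pos_nth: "\<forall>x\<in>set \<alpha>. 0 < x \<Longrightarrow> i < length \<alpha> \<Longrightarrow> 0 < \<alpha>!i"
  using nth_mem by blast

lemma Bk_ne: assumes "\<forall>x\<in>set \<alpha>. 0 < x" "i < length \<alpha>" shows "Bk \<alpha> i \<noteq> {}"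
  using pos_nth[OF assms] by (simp add: Bk_eq psum_Suc[OF assms(2)])

lemma Min_Bk: assumes "\<forall>x\<in>set \<alpha>. 0 < x" "i < length \<alpha>" shows "Min (Bk \<alpha> i) = psum \<alpha> i + 1"
  using pos_nth[OF assms] by (intro Min_eqI) (auto simp: Bk_eq psum_Suc[OF assms(2)])

lemma SetC_eq: "SetC \<alpha> = psum \<alpha> ` {1..<length \<alpha>}"
  by (auto simp: SetC_def)

lemma cnt_Bk:
  assumes pos: "\<forall>x\<in>set \<alpha>. 0 < x" and i: "i < length \<alpha>" and x: "x \<in> Bk \<alpha> i"
  shows "cnt (SetC \<alpha>) x = i"
proof -
  have x1: "psum \<alpha> i < x" and x2: "x \<le> psum \<alpha> (Suc i)" using x by (auto simp: Bk_eq)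
  have inj: "inj_on (psum \<alpha>) {1..<length \<alpha>}"
  proof (rule inj_onI)
    fix a b assume "a \<in> {1..<length \<alpha>}" "b \<in> {1..<length \<alpha>}" "psum \<alpha> a = psum \<alpha> b"
    then show "a = b"
    proof (cases a b rule: linorder_cases)
      case less
      then have "psum \<alpha> a < psum \<alpha> b" using psum_strict[OF pos, of a b] \<open>b \<in> {1..<length \<alpha>}\<close> by simp
      then show ?thesis using \<open>psum \<alpha> a = psum \<alpha> b\<close> by simp
    next
      case greater
      then have "psum \<alpha> b < psum \<alpha> a" using psum_strict[OF pos, of b a] \<open>a \<in> {1..<length \<alpha>}\<close> by simp
      then show ?thesis using \<open>psum \<alpha> a = psum \<alpha> b\<close> by simp
    qed simp
  qed
  have "{j\<in>SetC \<alpha>. j < x} = psum \<alpha> ` {1..i}"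
  proof
    show "{j\<in>SetC \<alpha>. j < x} \<subseteq> psum \<alpha> ` {1..i}"
    proof
      fix j assume "j \<in> {j\<in>SetC \<alpha>. j < x}"
      then obtain j' where j': "j' \<in> {1..<length \<alpha>}" "j = psum \<alpha> j'" "psum \<alpha> j' < x"
        by (auto simp: SetC_eq)
      have "j' \<le> i"
      proof (rule ccontr)
        assume "\<not> j' \<le> i"
        then have "psum \<alpha> (Suc i) \<le> psum \<alpha> j'" by (intro psum_mono) simp
        then show False using x2 j' by simp
      qed
      then show "j \<in> psum \<alpha> ` {1..i}" using j' by auto
    qed
  next
    show "psum \<alpha> ` {1..i} \<subseteq> {j\<in>SetC \<alpha>. j < x}"
    proof
      fix j assume "j \<in> psum \<alpha> ` {1..i}"
      then obtain j' where j': "j' \<in> {1..i}" "j = psum \<alpha> j'" by auto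
      have "psum \<alpha> j' \<le> psum \<alpha> i" using j' by (intro psum_mono) simp
      then show "j \<in> {j\<in>SetC \<alpha>. j < x}" using j' x1 i by (auto simp: SetC_eq)
    qed
  qed
  moreover have "card (psum \<alpha> ` {1..i}) = i"
  proof -
    have "{1..i} \<subseteq> {1..<length \<alpha>}" using i by auto
    then have "inj_on (psum \<alpha>) {1..i}" using inj inj_on_subset by blast
    then show ?thesis by (simp add: card_image)
  qed
  ultimately show ?thesis by (simp add: cnt_def)
qed

lemma Bk_exists:
  assumes "x \<in> {1..sum_list \<alpha>}"
  shows "\<exists>i<length \<alpha>. x \<in> Bk \<alpha> i"
proof -
  define j0 where "j0 = (LEAST j. x \<le> psum \<alpha> j)"
  have ex: "x \<le> psum \<alpha> (length \<alpha>)" using assms psum_len by auto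
  have j0: "x \<le> psum \<alpha> j0" unfolding j0_def by (rule LeastI[of _ "length \<alpha>"]) (rule ex)
  have j0le: "j0 \<le> length \<alpha>" unfolding j0_def by (rule Least_le) (rule ex)
  have j0pos: "j0 \<noteq> 0"
  proof
    assume "j0 = 0"
    then show False using j0 assms by simp
  qed
  have "\<not> x \<le> psum \<alpha> (j0 - 1)" unfolding j0_def
    by (rule not_less_Least) (use j0pos in \<open>simp add: j0_def\<close>)
  then have "x \<in> Bk \<alpha> (j0 - 1)" using j0 j0pos by (auto simp: Bk_eq)
  then show ?thesis using j0le j0pos by (intro exI[of _ "j0 - 1"]) auto
qed

lemma Bk_sub: "i < length \<alpha> \<Longrightarrow> Bk \<alpha> i \<subseteq> {1..sum_list \<alpha>}"
proof -
  assume i: "i < length \<alpha>"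
  have "psum \<alpha> (Suc i) \<le> psum \<alpha> (length \<alpha>)" using i by (intro psum_mono) simp
  then show ?thesis by (auto simp: Bk_eq psum_len)
qed

lemma Bk_iff:
  assumes pos: "\<forall>x\<in>set \<alpha>. 0 < x" and i: "i < length \<alpha>"
  shows "x \<in> Bk \<alpha> i \<longleftrightarrow> x \<in> {1..sum_list \<alpha>} \<and> cnt (SetC \<alpha>) x = i"
proof
  assume "x \<in> Bk \<alpha> i"
  then show "x \<in> {1..sum_list \<alpha>} \<and> cnt (SetC \<alpha>) x = i"
    using Bk_sub[OF i] cnt_Bk[OF pos i] by auto
next
  assume h: "x \<in> {1..sum_list \<alpha>} \<and> cnt (SetC \<alpha>) x = i"
  then obtain i' where "i' < length \<alpha>" "x \<in> Bk \<alpha> i'" using Bk_exists by blast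
  moreover then have "cnt (SetC \<alpha>) x = i'" using cnt_Bk[OF pos, of i' x] by simp
  ultimately show "x \<in> Bk \<alpha> i" using h by simp
qed

lemma cnt_lt:
  assumes pos: "\<forall>x\<in>set \<alpha>. 0 < x" and x: "x \<in> {1..sum_list \<alpha>}"
  shows "cnt (SetC \<alpha>) x < length \<alpha>"
proof -
  obtain i where "i < length \<alpha>" "x \<in> Bk \<alpha> i" using Bk_exists[OF x] by blast
  then show ?thesis using cnt_Bk[OF pos, of i x] by simp
qed

lemma Bk_disj:
  assumes pos: "\<forall>x\<in>set \<alpha>. 0 < x" and "i < length \<alpha>" "j < length \<alpha>" "i \<noteq> j"
  shows "Bk \<alpha> i \<inter> Bk \<alpha> j = {}"
proof (rule ccontr)
  assume "Bk \<alpha> i \<inter> Bk \<alpha> j \<noteq> {}"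
  then obtain x where "x \<in> Bk \<alpha> i" "x \<in> Bk \<alpha> j" by blast
  then show False using cnt_Bk[OF pos, of i x] cnt_Bk[OF pos, of j x] assms by simp
qed

lemma Union_Bk: "(\<Union>i<length \<alpha>. Bk \<alpha> i) = {1..sum_list \<alpha>}"
proof
  show "(\<Union>i<length \<alpha>. Bk \<alpha> i) \<subseteq> {1..sum_list \<alpha>}" using Bk_sub by auto
  show "{1..sum_list \<alpha>} \<subseteq> (\<Union>i<length \<alpha>. Bk \<alpha> i)"
  proof
    fix x assume "x \<in> {1..sum_list \<alpha>}"
    then obtain i where "i < length \<alpha>" "x \<in> Bk \<alpha> i" using Bk_exists by blast
    then show "x \<in> (\<Union>i<length \<alpha>. Bk \<alpha> i)" by auto
  qed
qed


lemma prod_if_all: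
  "finite I \<Longrightarrow> (\<Prod>i\<in>I. if P i then c i else 0) = (if \<forall>i\<in>I. P i then \<Prod>i\<in>I. c i else (0::'a::comm_semiring_1))"
proof (cases "\<forall>i\<in>I. P i")
  case True
  then show ?thesis by simp
next
  case False
  assume fin: "finite I"
  from False obtain i where "i \<in> I" "\<not> P i" by blast
  then have "(\<Prod>i\<in>I. if P i then c i else 0) = 0" by (intro prod_zero[OF fin]) auto
  then show ?thesis using False by auto
qed

lemma vword_cong:
  assumes "finite S" "\<forall>x\<in>S. x \<in> L \<longleftrightarrow> x \<in> L'"
  shows "vword S L = vword S L'"
proof -
  have "\<forall>x\<in>set (sorted_list_of_set S). x \<in> L \<longleftrightarrow> x \<in> L'" using assms by simp
  then show ?thesis unfolding vword_def vw_def
    by (metis (mono_tags, lifting) filter_cong)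
qed

lemma Vcomp_char:
  assumes pos: "\<forall>x\<in>set \<alpha>. 0 < x"
  shows "(Vcomp \<alpha> :: 'k::comm_ring_1 ncpoly) y = (\<Sum>L\<in>Pow (NN \<alpha>). if y = W \<alpha> L then (-1)^card L else 0)"
proof -
  define k where "k = length \<alpha>"
  define NB where "NB i = Bk \<alpha> i - {Min (Bk \<alpha> i)}" for i
  define ch where "ch i = take (\<alpha>!i) (drop (psum \<alpha> i) y)" for i
  define Fs where "Fs = map (\<lambda>i. VS (Bk \<alpha> i) :: 'k ncpoly) [0..<k]"
  have up: "[1..<Suc k] = map Suc [0..<k]" by (simp add: map_Suc_upt)
  have V: "(Vcomp \<alpha> :: 'k ncpoly) = foldr nc_mult Fs nc_one"
    unfolding Vcomp_def Fs_def k_def[symmetric] up by (simp add: Bk_def comp_def)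
  have hom: "\<forall>i<length Fs. \<forall>x. length x \<noteq> \<alpha>!i \<longrightarrow> (Fs!i) x = 0"
  proof (intro allI impI)
    fix i and x :: "nat list" assume i: "i < length Fs" and x: "length x \<noteq> \<alpha>!i"
    have ik: "i < length \<alpha>" using i by (simp add: Fs_def k_def)
    show "(Fs!i) x = 0" using i x VS_hom[OF finite_Bk Bk_ne[OF pos ik], of x] card_Bk[OF ik]
      by (simp add: Fs_def)
  qed
  have lenFs: "length \<alpha> = length Fs" by (simp add: Fs_def k_def)
  have "(Vcomp \<alpha> :: 'k ncpoly) y = (if length y = sum_list \<alpha> then (\<Prod>i<k. VS (Bk \<alpha> i) (ch i)) else 0)"
    unfolding V foldr_hom[OF lenFs hom] by (simp add: Fs_def ch_def psum_def k_def)
  also have "(\<Prod>i<k. (VS (Bk \<alpha> i) :: 'k ncpoly) (ch i)) =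
      (\<Prod>i<k. \<Sum>L\<in>Pow (NB i). if ch i = vword (Bk \<alpha> i) L then (-1)^card L else 0)"
    by (rule prod.cong) (simp_all add: VS_char[OF finite_Bk Bk_ne[OF pos]] NB_def k_def)
  also have "\<dots> = (\<Sum>L\<in>Pow (\<Union>i\<in>{..<k}. NB i). \<Prod>i<k. if ch i = vword (Bk \<alpha> i) (L \<inter> NB i) then (-1)^card (L \<inter> NB i) else 0)"
  proof (rule prod_sum_Pow)
    show "disjoint_family_on NB {..<k}"
      unfolding disjoint_family_on_def NB_def k_def using Bk_disj[OF pos] by blast
  qed (auto simp: NB_def)
  also have "\<dots> = (\<Sum>L\<in>Pow (NN \<alpha>). if (\<forall>i<k. ch i = vword (Bk \<alpha> i) L) then (-1)^card L else 0)"
  proof -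
    have NN: "(\<Union>i\<in>{..<k}. NB i) = NN \<alpha>" by (simp add: NN_def NB_def k_def)
    show ?thesis unfolding NN
    proof (rule sum.cong)
      fix L assume L: "L \<in> Pow (NN \<alpha>)"
      have vw: "vword (Bk \<alpha> i) (L \<inter> NB i) = vword (Bk \<alpha> i) L" if i: "i < k" for i
      proof (rule vword_cong[OF finite_Bk], intro ballI)
        fix x assume x: "x \<in> Bk \<alpha> i"
        show "x \<in> L \<inter> NB i \<longleftrightarrow> x \<in> L"
        proof
          assume "x \<in> L"
          then obtain j where j: "j < k" "x \<in> NB j" using L by (auto simp: NN_def NB_def k_def)
          then have "j = i" using x Bk_disj[OF pos, of i j] i by (auto simp: NB_def k_def)
          then show "x \<in> L \<inter> NB i" using j \<open>x \<in> L\<close> by simp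
        qed simp
      qed
      have cardL: "(\<Sum>i<k. card (L \<inter> NB i)) = card L"
      proof -
        have "(\<Sum>i<k. card (L \<inter> NB i)) = card (\<Union>i<k. L \<inter> NB i)"
          by (rule card_UN_disjoint[symmetric]) (use Bk_disj[OF pos] in \<open>auto simp: NB_def k_def\<close>)
        also have "(\<Union>i<k. L \<inter> NB i) = L" using L by (auto simp: NN_def NB_def k_def)
        finally show ?thesis .
      qed
      have "(\<Prod>i<k. if ch i = vword (Bk \<alpha> i) (L \<inter> NB i) then (-1::'k)^card (L \<inter> NB i) else 0)
          = (\<Prod>i<k. if ch i = vword (Bk \<alpha> i) L then (-1)^card (L \<inter> NB i) else 0)"
        by (rule prod.cong) (simp_all add: vw)
      also have "\<dots> = (if (\<forall>i<k. ch i = vword (Bk \<alpha> i) L) then (\<Prod>i<k. (-1::'k)^card (L \<inter> NB i)) else 0)"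
        by (subst prod_if_all) auto
      also have "(\<Prod>i<k. (-1::'k)^card (L \<inter> NB i)) = (-1)^card L"
        by (simp add: power_sum[symmetric] cardL)
      finally show "(\<Prod>i<k. if ch i = vword (Bk \<alpha> i) (L \<inter> NB i) then (-1::'k)^card (L \<inter> NB i) else 0)
         = (if (\<forall>i<k. ch i = vword (Bk \<alpha> i) L) then (-1)^card L else 0)" .
    qed simp
  qed
  finally have eq: "(Vcomp \<alpha> :: 'k ncpoly) y = (if length y = sum_list \<alpha> then
       (\<Sum>L\<in>Pow (NN \<alpha>). if (\<forall>i<k. ch i = vword (Bk \<alpha> i) L) then (-1)^card L else 0) else 0)" .
  have W: "(y = W \<alpha> L) = (length y = sum_list \<alpha> \<and> (\<forall>i<k. ch i = vword (Bk \<alpha> i) L))" for L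
  proof -
    have ml: "map length (map (\<lambda>i. vword (Bk \<alpha> i) L) [0..<k]) = \<alpha>"
      by (rule nth_equalityI) (simp_all add: length_vword card_Bk k_def)
    show ?thesis unfolding W_def k_def[symmetric] concat_chunks ml
      by (auto simp: ch_def psum_def k_def length_vword card_Bk)
  qed
  show ?thesis unfolding eq W by (simp add: sum_if_const)
qed



definition bef :: "nat set \<Rightarrow> nat \<Rightarrow> nat \<Rightarrow> bool" where
  "bef L a b = ((a \<in> L \<and> b \<in> L \<and> b < a) \<or> (a \<in> L \<and> b \<notin> L) \<or> (a \<notin> L \<and> b \<notin> L \<and> a < b))"

definition ordW :: "nat list \<Rightarrow> nat set \<Rightarrow> nat \<Rightarrow> nat \<Rightarrow> bool" where
  "ordW \<alpha> L a b = (cnt (SetC \<alpha>) a < cnt (SetC \<alpha>) b \<or> (cnt (SetC \<alpha>) a = cnt (SetC \<alpha>) b \<and> bef L a b))"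

lemma bef_irrefl: "\<not> bef L a a" by (auto simp: bef_def)
lemma bef_asym: "bef L a b \<Longrightarrow> \<not> bef L b a" by (auto simp: bef_def)
lemma ordW_irrefl: "\<not> ordW \<alpha> L a a" by (simp add: ordW_def bef_irrefl)
lemma ordW_asym: "ordW \<alpha> L a b \<Longrightarrow> \<not> ordW \<alpha> L b a" using bef_asym by (auto simp: ordW_def)

lemma set_vw: "set (vw xs L) = set xs" by (auto simp: vw_def)

lemma vw_sorted:
  assumes "sorted_wrt (<) xs"
  shows "sorted_wrt (bef L) (vw xs L)"
proof -
  have s1: "sorted_wrt (<) (filter (\<lambda>x. x \<in> L) xs)" using assms by (rule sorted_wrt_filter)
  have s2: "sorted_wrt (<) (filter (\<lambda>x. x \<notin> L) xs)" using assms by (rule sorted_wrt_filter)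
  have a: "sorted_wrt (bef L) (rev (filter (\<lambda>x. x \<in> L) xs))"
    unfolding sorted_wrt_rev
    by (rule sorted_wrt_mono_rel[OF _ s1]) (auto simp: bef_def)
  have b: "sorted_wrt (bef L) (filter (\<lambda>x. x \<notin> L) xs)"
    by (rule sorted_wrt_mono_rel[OF _ s2]) (auto simp: bef_def)
  show ?thesis unfolding vw_def sorted_wrt_append using a b by (auto simp: bef_def)
qed

lemma sorted_wrt_concat_upt:
  assumes "\<forall>i<k. sorted_wrt R (f i)"
    and "\<forall>i j. i < j \<longrightarrow> j < k \<longrightarrow> (\<forall>a\<in>set (f i). \<forall>b\<in>set (f j). R a b)"
  shows "sorted_wrt R (concat (map f [0..<k]))"
  using assms
proof (induction k)
  case 0
  then show ?case by simp
next
  case (Suc k)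
  have IH: "sorted_wrt R (concat (map f [0..<k]))" using Suc by auto
  show ?case unfolding upt_Suc using Suc.prems IH by (auto simp: sorted_wrt_append)
qed

lemma sorted_wrt_distinct:
  "(\<forall>x. \<not> R x x) \<Longrightarrow> sorted_wrt R xs \<Longrightarrow> distinct xs"
  by (induction xs) auto

lemma set_vword: "finite S \<Longrightarrow> set (vword S L) = S"
  by (simp add: vword_def set_vw)

lemma W_sorted:
  assumes pos: "\<forall>x\<in>set \<alpha>. 0 < x"
  shows "sorted_wrt (ordW \<alpha> L) (W \<alpha> L)"
  unfolding W_def
proof (rule sorted_wrt_concat_upt)
  show "\<forall>i<length \<alpha>. sorted_wrt (ordW \<alpha> L) (vword (Bk \<alpha> i) L)"
  proof (intro allI impI)
    fix i assume i: "i < length \<alpha>"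
    have "sorted_wrt (bef L) (vword (Bk \<alpha> i) L)"
      unfolding vword_def by (rule vw_sorted) (rule strict_sorted_list_of_set)
    then show "sorted_wrt (ordW \<alpha> L) (vword (Bk \<alpha> i) L)"
    proof (rule sorted_wrt_mono_rel[rotated])
      fix a b assume "a \<in> set (vword (Bk \<alpha> i) L)" "b \<in> set (vword (Bk \<alpha> i) L)" "bef L a b"
      then show "ordW \<alpha> L a b" using cnt_Bk[OF pos i] by (simp add: set_vword ordW_def)
    qed
  qed
  show "\<forall>i j. i < j \<longrightarrow> j < length \<alpha> \<longrightarrow> (\<forall>a\<in>set (vword (Bk \<alpha> i) L). \<forall>b\<in>set (vword (Bk \<alpha> j) L). ordW \<alpha> L a b)"
  proof (intro allI impI ballI)
    fix i j a b assume ij: "i < j" "j < length \<alpha>" and a: "a \<in> set (vword (Bk \<alpha> i) L)" and b: "b \<in> set (vword (Bk \<alpha> j) L)"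
    have "cnt (SetC \<alpha>) a = i" using cnt_Bk[OF pos, of i a] a ij by (simp add: set_vword)
    moreover have "cnt (SetC \<alpha>) b = j" using cnt_Bk[OF pos, of j b] b ij by (simp add: set_vword)
    ultimately show "ordW \<alpha> L a b" using ij by (simp add: ordW_def)
  qed
qed

lemma set_W: "set (W \<alpha> L) = {1..sum_list \<alpha>}"
  unfolding W_def using Union_Bk[of \<alpha>] by (simp add: set_vword atLeast0LessThan)

lemma distinct_W: "\<forall>x\<in>set \<alpha>. 0 < x \<Longrightarrow> distinct (W \<alpha> L)"
  by (rule sorted_wrt_distinct[OF _ W_sorted]) (auto simp: ordW_irrefl)

lemma length_W: "\<forall>x\<in>set \<alpha>. 0 < x \<Longrightarrow> length (W \<alpha> L) = sum_list \<alpha>"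
  using distinct_card[OF distinct_W, of \<alpha> L] set_W[of \<alpha> L] by simp

lemma length_underline[simp]: "length (underline n f) = n"
  by (simp add: underline_def del: upt_Suc)

lemma nth_underline[simp]: "i < n \<Longrightarrow> underline n f ! i = f (Suc i)"
  by (simp add: underline_def del: upt_Suc)

definition tau :: "nat list \<Rightarrow> nat set \<Rightarrow> nat \<Rightarrow> nat" where
  "tau \<alpha> L i = (if i \<in> {1..sum_list \<alpha>} then W \<alpha> L ! (i - 1) else i)"

lemma tau_permutes:
  assumes pos: "\<forall>x\<in>set \<alpha>. 0 < x"
  shows "tau \<alpha> L permutes {1..sum_list \<alpha>}"
proof (rule bij_imp_permutes)
  let ?n = "sum_list \<alpha>"
  have b1: "bij_betw (\<lambda>i. i - 1) {1..?n} {..<?n}"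
    by (rule bij_betw_byWitness[where f' = Suc]) auto
  have b2: "bij_betw ((!) (W \<alpha> L)) {..<?n} {1..?n}"
    by (rule bij_betw_nth[OF distinct_W[OF pos]]) (simp_all add: length_W[OF pos] set_W)
  have "bij_betw ((!) (W \<alpha> L) \<circ> (\<lambda>i. i - 1)) {1..?n} {1..?n}"
    by (rule bij_betw_trans[OF b1 b2])
  then show "bij_betw (tau \<alpha> L) {1..?n} {1..?n}"
  proof -
    have "\<And>x. x \<in> {1..?n} \<Longrightarrow> ((!) (W \<alpha> L) \<circ> (\<lambda>i. i - 1)) x = tau \<alpha> L x" by (simp add: tau_def)
    then have "bij_betw ((!) (W \<alpha> L) \<circ> (\<lambda>i. i - 1)) {1..?n} {1..?n} = bij_betw (tau \<alpha> L) {1..?n} {1..?n}"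
      by (rule bij_betw_cong)
    then show ?thesis using \<open>bij_betw ((!) (W \<alpha> L) \<circ> (\<lambda>i. i - 1)) {1..?n} {1..?n}\<close> by simp
  qed
  show "\<And>x. x \<notin> {1..?n} \<Longrightarrow> tau \<alpha> L x = x" unfolding tau_def by auto
qed

lemma underline_tau:
  assumes pos: "\<forall>x\<in>set \<alpha>. 0 < x"
  shows "underline (sum_list \<alpha>) (tau \<alpha> L) = W \<alpha> L"
proof (rule nth_equalityI)
  show "length (underline (sum_list \<alpha>) (tau \<alpha> L)) = length (W \<alpha> L)"
  proof -
    show ?thesis using length_W[OF pos] by simp
  qed
  fix i assume "i < length (underline (sum_list \<alpha>) (tau \<alpha> L))"
  then have i: "i < sum_list \<alpha>" by simp
  have "underline (sum_list \<alpha>) (tau \<alpha> L) ! i = tau \<alpha> L (Suc i)"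
    using i by simp
  also have "\<dots> = W \<alpha> L ! i" using i by (simp add: tau_def)
  finally show "underline (sum_list \<alpha>) (tau \<alpha> L) ! i = W \<alpha> L ! i" .
qed

lemma tau_order:
  assumes pos: "\<forall>x\<in>set \<alpha>. 0 < x" and a: "a \<in> {1..sum_list \<alpha>}" and b: "b \<in> {1..sum_list \<alpha>}"
    and ab: "a \<noteq> b"
  shows "inv (tau \<alpha> L) a < inv (tau \<alpha> L) b \<longleftrightarrow> ordW \<alpha> L a b"
proof -
  let ?t = "tau \<alpha> L" and ?n = "sum_list \<alpha>"
  have perm: "?t permutes {1..?n}" by (rule tau_permutes[OF pos])
  define p where "p = inv ?t a"
  define q where "q = inv ?t b"
  have p: "p \<in> {1..?n}" "?t p = a" using a permutes_in_image[OF permutes_inv[OF perm], of a] permutes_inverses(1)[OF perm]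
    by (auto simp: p_def)
  have q: "q \<in> {1..?n}" "?t q = b" using b permutes_in_image[OF permutes_inv[OF perm], of b] permutes_inverses(1)[OF perm]
    by (auto simp: q_def)
  have pa: "W \<alpha> L ! (p - 1) = a" using p by (simp add: tau_def)
  have qb: "W \<alpha> L ! (q - 1) = b" using q by (simp add: tau_def)
  have pq: "p \<noteq> q"
  proof
    assume "p = q" then have "?t p = ?t q" by simp
    then show False using p(2) q(2) ab by simp
  qed
  have sw: "sorted_wrt (ordW \<alpha> L) (W \<alpha> L)" by (rule W_sorted[OF pos])
  have ord: "ordW \<alpha> L (W \<alpha> L ! i) (W \<alpha> L ! j)" if "i < j" "j < ?n" for i j
    using sw that length_W[OF pos] by (auto simp: sorted_wrt_iff_nth_less)
  have "p < q \<longleftrightarrow> ordW \<alpha> L a b"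
  proof
    assume "p < q"
    then have "p - 1 < q - 1" "q - 1 < ?n" using p(1) q(1) by auto
    then show "ordW \<alpha> L a b" using ord[of "p - 1" "q - 1"] pa qb by simp
  next
    assume h: "ordW \<alpha> L a b"
    show "p < q"
    proof (rule ccontr)
      assume "\<not> p < q"
      then have "q < p" using pq by simp
      then have "q - 1 < p - 1" "p - 1 < ?n" using p(1) q(1) by auto
      then have "ordW \<alpha> L b a" using ord[of "q - 1" "p - 1"] pa qb by simp
      then show False using ordW_asym h by blast
    qed
  qed
  then show ?thesis by (simp only: p_def q_def)
qed



lemma word_act_underline:
  assumes "\<rho> permutes {1..n}"
  shows "word_act (underline n w) \<rho> = underline n (w \<circ> \<rho>)"
proof (rule nth_equalityI)
  show "length (word_act (underline n w) \<rho>) = length (underline n (w \<circ> \<rho>))"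
    by (simp add: word_act_def)
  fix i assume "i < length (word_act (underline n w) \<rho>)"
  then have i: "i < n" by (simp add: word_act_def)
  have r: "\<rho> (Suc i) \<in> {1..n}" using permutes_in_image[OF assms, of "Suc i"] i by simp
  then have "\<rho> (Suc i) - 1 < n" by auto
  then have "underline n w ! (\<rho> (Suc i) - 1) = w (\<rho> (Suc i))" using r by simp
  then show "word_act (underline n w) \<rho> ! i = underline n (w \<circ> \<rho>) ! i"
    using i by (simp add: word_act_def)
qed

lemma underline_inj:
  assumes "s1 permutes {1..n}" "s2 permutes {1..n}" "underline n s1 = underline n s2"
  shows "s1 = s2"
proof
  fix x
  show "s1 x = s2 x"
  proof (cases "x \<in> {1..n}")
    case True
    then have "x - 1 < n" "Suc (x - 1) = x" by auto
    then show ?thesis using assms(3) nth_underline[of "x - 1" n s1] nth_underline[of "x - 1" n s2] by simp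
  next
    case False
    then show ?thesis using assms(1,2) permutes_not_in by metis
  qed
qed

lemma comp_inv_eq:
  assumes g: "g permutes S" and v: "v permutes S" and t: "t permutes S"
  shows "(g \<circ> inv v = t) \<longleftrightarrow> (v = inv t \<circ> g)"
proof
  assume h: "g \<circ> inv v = t"
  show "v = inv t \<circ> g"
  proof
    fix x
    have "t (v x) = g (inv v (v x))" using h by auto
    also have "\<dots> = g x" using permutes_inverses(2)[OF v] by simp
    finally have "t (v x) = g x" .
    then have "inv t (g x) = v x" using permutes_inverses(2)[OF t] by metis
    then show "v x = (inv t \<circ> g) x" by simp
  qed
next
  assume h: "v = inv t \<circ> g"
  show "g \<circ> inv v = t"
  proof
    fix y
    have "v (inv v y) = y" using permutes_inverses(1)[OF v] by simp
    then have "inv t (g (inv v y)) = y" using h by simp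
    then have "t (inv t (g (inv v y))) = t y" by simp
    then show "(g \<circ> inv v) y = t y" using permutes_inverses(1)[OF t] by simp
  qed
qed

lemma coef_formula:
  fixes w u :: "nat \<Rightarrow> nat"
  assumes pos: "\<forall>x\<in>set \<beta>. 0 < x" and n: "sum_list \<beta> = n"
    and w: "w permutes {1..n}" and u: "u permutes {1..n}"
  shows "actBu n (Vcomp \<beta> :: 'k::comm_ring_1 ncpoly) I u (underline n w) =
    (\<Sum>L\<in>Pow (NN \<beta>). if Des n (inv (tau \<beta> L) \<circ> (w \<circ> inv u)) \<subseteq> I then (-1)^card L else 0)"
proof -
  define Pv where "Pv = {v \<in> perms n. Des n v \<subseteq> I}"
  define g where "g = w \<circ> inv u"
  have g: "g permutes {1..n}" unfolding g_def by (rule permutes_compose[OF permutes_inv[OF u] w])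
  have finPv: "finite Pv" unfolding Pv_def perms_def using finite_permutations[of "{1..n}"] by simp
  have step1: "act n (Vcomp \<beta> :: 'k ncpoly) (v \<circ> u) (underline n w) =
     (\<Sum>L\<in>Pow (NN \<beta>). if underline n (g \<circ> inv v) = W \<beta> L then (-1)^card L else 0)"
    if v: "v \<in> Pv" for v
  proof -
    have vp: "v permutes {1..n}" using v by (simp add: Pv_def perms_def)
    have vu: "v \<circ> u permutes {1..n}" by (rule permutes_compose[OF u vp])
    have iv: "inv (v \<circ> u) permutes {1..n}" by (rule permutes_inv[OF vu])
    have "inv (v \<circ> u) = inv u \<circ> inv v"
      by (rule o_inv_distrib) (simp_all add: permutes_bij[OF vp] permutes_bij[OF u])
    then have "w \<circ> inv (v \<circ> u) = g \<circ> inv v" by (simp add: g_def comp_assoc)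
    then have "word_act (underline n w) (inv (v \<circ> u)) = underline n (g \<circ> inv v)"
      using word_act_underline[OF iv] by simp
    then show ?thesis by (simp add: act_def Vcomp_char[OF pos])
  qed
  have "actBu n (Vcomp \<beta> :: 'k ncpoly) I u (underline n w) =
     (\<Sum>v\<in>Pv. \<Sum>L\<in>Pow (NN \<beta>). if underline n (g \<circ> inv v) = W \<beta> L then (-1)^card L else 0)"
    unfolding actBu_def Pv_def[symmetric] by (rule sum.cong) (simp_all add: step1)
  also have "\<dots> = (\<Sum>L\<in>Pow (NN \<beta>). \<Sum>v\<in>Pv. if underline n (g \<circ> inv v) = W \<beta> L then (-1)^card L else 0)"
    by (rule sum.swap)
  also have "\<dots> = (\<Sum>L\<in>Pow (NN \<beta>). if Des n (inv (tau \<beta> L) \<circ> g) \<subseteq> I then (-1)^card L else 0)"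
  proof (rule sum.cong)
    fix L assume L: "L \<in> Pow (NN \<beta>)"
    define t where "t = tau \<beta> L"
    have t: "t permutes {1..n}" using tau_permutes[OF pos, of L] n by (simp add: t_def)
    have Wt: "W \<beta> L = underline n t" using underline_tau[OF pos, of L] n by (simp add: t_def)
    have v0: "inv t \<circ> g \<in> perms n" unfolding perms_def
      using permutes_compose[OF g permutes_inv[OF t]] by simp
    have eq: "(underline n (g \<circ> inv v) = W \<beta> L) = (v = inv t \<circ> g)" if v: "v \<in> Pv" for v
    proof -
      have vp: "v permutes {1..n}" using v by (simp add: Pv_def perms_def)
      have gv: "g \<circ> inv v permutes {1..n}" by (rule permutes_compose[OF permutes_inv[OF vp] g])
      have "(underline n (g \<circ> inv v) = underline n t) = (g \<circ> inv v = t)"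
        using underline_inj[OF gv t] by auto
      also have "\<dots> = (v = inv t \<circ> g)" by (rule comp_inv_eq[OF g vp t])
      finally show ?thesis using Wt by simp
    qed
    have "(\<Sum>v\<in>Pv. if underline n (g \<circ> inv v) = W \<beta> L then (-1)^card L else (0::'k))
        = (\<Sum>v\<in>Pv. if v = inv t \<circ> g then (-1)^card L else 0)"
      by (rule sum.cong) (simp_all add: eq)
    also have "\<dots> = (if inv t \<circ> g \<in> Pv then (-1)^card L else 0)"
      using finPv by simp
    also have "\<dots> = (if Des n (inv (tau \<beta> L) \<circ> g) \<subseteq> I then (-1)^card L else 0)"
      using v0 by (simp add: Pv_def t_def)
    finally show "(\<Sum>v\<in>Pv. if underline n (g \<circ> inv v) = W \<beta> L then (-1)^card L else (0::'k))
        = (if Des n (inv (tau \<beta> L) \<circ> g) \<subseteq> I then (-1)^card L else 0)" .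
  qed simp
  finally show ?thesis by (simp add: g_def)
qed

lemma cnt_mono: "x \<le> y \<Longrightarrow> cnt I x \<le> cnt I y"
  unfolding cnt_def by (rule card_mono) auto

lemma cnt_Suc: "cnt I (Suc x) = cnt I x + (if x \<in> I then 1 else 0)"
proof -
  have "{i\<in>I. i < Suc x} = {i\<in>I. i < x} \<union> ({x} \<inter> I)" by auto
  moreover have "finite {i\<in>I. i < x}" by simp
  ultimately show ?thesis unfolding cnt_def by (auto simp: card_insert_if)
qed

lemma Des_sub_iff:
  assumes inj: "inj_on v {1..n}"
  shows "Des n v \<subseteq> I \<longleftrightarrow> (\<forall>j\<in>{1..n}. \<forall>j'\<in>{1..n}. j < j' \<and> cnt I j = cnt I j' \<longrightarrow> v j < v j')"
proof
  assume D: "Des n v \<subseteq> I"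
  show "\<forall>j\<in>{1..n}. \<forall>j'\<in>{1..n}. j < j' \<and> cnt I j = cnt I j' \<longrightarrow> v j < v j'"
  proof (intro ballI impI)
    fix j j' assume j: "j \<in> {1..n}" and j': "j' \<in> {1..n}" and h: "j < j' \<and> cnt I j = cnt I j'"
    obtain d where d: "j' = Suc j + d" using h less_iff_Suc_add by blast
    have "\<forall>d'. j + Suc d' \<le> n \<longrightarrow> cnt I j = cnt I (j + Suc d') \<longrightarrow> v j < v (j + Suc d')"
    proof
      fix d'
      show "j + Suc d' \<le> n \<longrightarrow> cnt I j = cnt I (j + Suc d') \<longrightarrow> v j < v (j + Suc d')"
      proof (induction d')
        case 0
        show ?case
        proof (intro impI)
          assume le: "j + Suc 0 \<le> n" and c: "cnt I j = cnt I (j + Suc 0)"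
          have "j \<notin> I" using c cnt_Suc[of I j] by (auto split: if_splits)
          then have "j \<notin> Des n v" using D by auto
          then have "\<not> v j > v (Suc j)" using j le by (auto simp: Des_def)
          moreover have "v j \<noteq> v (Suc j)" using inj j le by (auto dest: inj_onD)
          ultimately show "v j < v (j + Suc 0)" by simp
        qed
      next
        case (Suc d')
        show ?case
        proof (intro impI)
          assume le: "j + Suc (Suc d') \<le> n" and c: "cnt I j = cnt I (j + Suc (Suc d'))"
          have m1: "cnt I j \<le> cnt I (j + Suc d')" by (rule cnt_mono) simp
          have m2: "cnt I (j + Suc d') \<le> cnt I (j + Suc (Suc d'))" by (rule cnt_mono) simp
          have c1: "cnt I j = cnt I (j + Suc d')" using m1 m2 c by simp
          have c2: "cnt I (j + Suc d') = cnt I (Suc (j + Suc d'))" using m1 m2 c by simp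
          have lt1: "v j < v (j + Suc d')" using Suc le c1 by simp
          have "j + Suc d' \<notin> I" using c2 cnt_Suc[of I "j + Suc d'"] by (auto split: if_splits)
          then have "j + Suc d' \<notin> Des n v" using D by auto
          then have "\<not> v (j + Suc d') > v (Suc (j + Suc d'))" using j le by (auto simp: Des_def)
          moreover have "v (j + Suc d') \<noteq> v (Suc (j + Suc d'))" using inj j le by (auto dest: inj_onD)
          ultimately show "v j < v (j + Suc (Suc d'))" using lt1 by simp
        qed
      qed
    qed
    then show "v j < v j'" using d h j' by simp
  qed
next
  assume H: "\<forall>j\<in>{1..n}. \<forall>j'\<in>{1..n}. j < j' \<and> cnt I j = cnt I j' \<longrightarrow> v j < v j'"
  show "Des n v \<subseteq> I"
  proof
    fix i assume i: "i \<in> Des n v"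
    then have i1: "i \<in> {1..n-1}" and gt: "v i > v (Suc i)" by (auto simp: Des_def)
    show "i \<in> I"
    proof (rule ccontr)
      assume "i \<notin> I"
      then have "cnt I i = cnt I (Suc i)" by (simp add: cnt_Suc)
      then have "v i < v (Suc i)" using H i1 by auto
      then show False using gt by simp
    qed
  qed
qed

definition Good :: "nat \<Rightarrow> nat list \<Rightarrow> nat set \<Rightarrow> (nat \<Rightarrow> nat) \<Rightarrow> nat set \<Rightarrow> bool" where
  "Good n \<beta> I g L = (\<forall>j\<in>{1..n}. \<forall>j'\<in>{1..n}. j < j' \<and> cnt I j = cnt I j' \<longrightarrow> ordW \<beta> L (g j) (g j'))"

lemma coef_Good:
  fixes w u :: "nat \<Rightarrow> nat"
  assumes pos: "\<forall>x\<in>set \<beta>. 0 < x" and n: "sum_list \<beta> = n"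
    and w: "w permutes {1..n}" and u: "u permutes {1..n}"
  shows "actBu n (Vcomp \<beta> :: 'k::comm_ring_1 ncpoly) I u (underline n w) =
    (\<Sum>L\<in>Pow (NN \<beta>). if Good n \<beta> I (w \<circ> inv u) L then (-1)^card L else 0)"
  unfolding coef_formula[OF pos n w u]
proof (rule sum.cong)
  fix L assume L: "L \<in> Pow (NN \<beta>)"
  define g where "g = w \<circ> inv u"
  define t where "t = tau \<beta> L"
  have g: "g permutes {1..n}" unfolding g_def by (rule permutes_compose[OF permutes_inv[OF u] w])
  have t: "t permutes {1..n}" using tau_permutes[OF pos, of L] n by (simp add: t_def)
  have v0: "inv t \<circ> g permutes {1..n}" by (rule permutes_compose[OF g permutes_inv[OF t]])
  have "Des n (inv t \<circ> g) \<subseteq> I \<longleftrightarrow> (\<forall>j\<in>{1..n}. \<forall>j'\<in>{1..n}. j < j' \<and> cnt I j = cnt I j' \<longrightarrow> (inv t \<circ> g) j < (inv t \<circ> g) j')"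
    by (rule Des_sub_iff) (rule permutes_inj_on[OF v0])
  also have "\<dots> \<longleftrightarrow> Good n \<beta> I g L"
    unfolding Good_def
  proof (intro ball_cong refl imp_cong)
    fix j j' assume j: "j \<in> {1..n}" and j': "j' \<in> {1..n}" and h: "j < j' \<and> cnt I j = cnt I j'"
    have gj: "g j \<in> {1..n}" "g j' \<in> {1..n}" using permutes_in_image[OF g] j j' by auto
    have "g j \<noteq> g j'" using h permutes_inj[OF g] by (auto dest: injD)
    then show "((inv t \<circ> g) j < (inv t \<circ> g) j') = ordW \<beta> L (g j) (g j')"
      using tau_order[OF pos, of "g j" "g j'" L] gj n by (simp add: t_def)
  qed
  finally show "(if Des n (inv (tau \<beta> L) \<circ> (w \<circ> inv u)) \<subseteq> I then (-1)^card L else (0::'k)) =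
     (if Good n \<beta> I (w \<circ> inv u) L then (-1)^card L else 0)"
    by (simp add: g_def t_def)
qed simp



lemma Comp_props:
  assumes I: "I \<subseteq> {1..n-1}"
  shows "(\<forall>x\<in>set (Comp n I). 0 < x) \<and> sum_list (Comp n I) = n \<and> SetC (Comp n I) = I"
proof (cases "n = 0")
  case True
  then have "I = {}" using I by auto
  then show ?thesis using True by (simp add: Comp_def SetC_def)
next
  case False
  define xs where "xs = sorted_list_of_set I"
  define s where "s = [0] @ xs @ [n]"
  define \<alpha> where "\<alpha> = map (\<lambda>i. s ! Suc i - s ! i) [0..<length s - 1]"
  have fin: "finite I" using I finite_subset by blast
  have setxs: "set xs = I" using fin by (simp add: xs_def)
  have al: "Comp n I = \<alpha>" using False by (simp add: Comp_def \<alpha>_def s_def xs_def Let_def)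
  have Ib: "0 < x \<and> x < n" if "x \<in> I" for x
  proof -
    have "x \<in> {1..n-1}" using I that by blast
    then show ?thesis using False by auto
  qed
  have ss: "sorted_wrt (<) s"
    unfolding s_def sorted_wrt_append using Ib False setxs
    by (auto simp: xs_def)
  have lens: "length s = length xs + 2" by (simp add: s_def)
  have lena: "length \<alpha> = length xs + 1" by (simp add: \<alpha>_def lens)
  have slt: "s ! i < s ! Suc i" if "i < length \<alpha>" for i
    using ss that lena lens by (auto simp: sorted_wrt_iff_nth_less)
  have anth: "\<alpha> ! i = s ! Suc i - s ! i" if "i < length \<alpha>" for i
    using that lena lens by (simp add: \<alpha>_def del: upt_Suc)
  have pos: "\<forall>x\<in>set \<alpha>. 0 < x"
  proof
    fix x assume "x \<in> set \<alpha>"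
    then obtain i where "i < length \<alpha>" "x = \<alpha> ! i" by (metis in_set_conv_nth)
    then show "0 < x" using anth slt by simp
  qed
  have ps: "psum \<alpha> i = s ! i" if "i \<le> length \<alpha>" for i
    using that
  proof (induction i)
    case 0
    then show ?case by (simp add: s_def)
  next
    case (Suc i)
    then have "i < length \<alpha>" by simp
    then show ?case using Suc psum_Suc[of i \<alpha>] anth[of i] slt[of i] by simp
  qed
  have sum: "sum_list \<alpha> = n"
  proof -
    have "sum_list \<alpha> = psum \<alpha> (length \<alpha>)" by (simp add: psum_len)
    also have "\<dots> = s ! (length xs + 1)" using ps lena by simp
    also have "\<dots> = n" by (simp add: s_def nth_append)
    finally show ?thesis .
  qed
  have setc: "SetC \<alpha> = I"
  proof -
    have "SetC \<alpha> = psum \<alpha> ` {1..<length \<alpha>}" by (rule SetC_eq)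
    also have "\<dots> = (\<lambda>i. s ! i) ` {1..<length \<alpha>}" using ps by (intro image_cong) auto
    also have "\<dots> = (\<lambda>i. xs ! i) ` {..<length xs}"
    proof -
      have "(\<lambda>i. s ! i) ` {1..<length \<alpha>} = (\<lambda>i. s ! Suc i) ` {..<length xs}"
      proof -
        have "{1..<length \<alpha>} = Suc ` {..<length xs}" using lena by (simp add: image_Suc_lessThan atLeastLessThanSuc_atLeastAtMost)
        then show ?thesis by (simp add: image_image)
      qed
      also have "\<dots> = (\<lambda>i. xs ! i) ` {..<length xs}"
        by (intro image_cong) (auto simp: s_def nth_append)
      finally show ?thesis .
    qed
    also have "\<dots> = set xs" by (auto simp: in_set_conv_nth)
    finally show ?thesis using setxs by simp
  qed
  show ?thesis using al pos sum setc by simp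
qed

lemma LRM_sub: "LRM n u \<subseteq> {1..n}" by (auto simp: LRM_def)

lemma LRM'_sub: "LRM' n u \<subseteq> {1..n-1}"
  by (auto simp: LRM'_def LRM_def)

lemma LRM_prop: "m \<in> LRM n u \<Longrightarrow> 1 \<le> k \<Longrightarrow> k < inv u m \<Longrightarrow> u k > m"
  by (auto simp: LRM_def)

lemma one_LRM:
  assumes u: "u permutes {1..n}" and n: "1 \<le> n"
  shows "1 \<in> LRM n u"
  unfolding LRM_def
proof (intro CollectI conjI allI impI)
  show "1 \<in> {1..n}" using n by simp
  fix k assume k: "1 \<le> k \<and> k < inv u 1"
  have "inv u 1 \<in> {1..n}" using permutes_in_image[OF permutes_inv[OF u], of 1] n by simp
  then have kn: "k \<in> {1..n}" using k by auto
  then have "u k \<in> {1..n}" using permutes_in_image[OF u] by simp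
  moreover have "u k \<noteq> 1"
  proof
    assume "u k = 1"
    then have "inv u 1 = k" using permutes_inv_eq[OF u] by simp
    then show False using k by simp
  qed
  ultimately show "1 < u k" by simp
qed

lemma cnt_LRM'_eq:
  assumes "1 \<le> x" "x \<le> y"
  shows "cnt (LRM' n u) x = cnt (LRM' n u) y \<longleftrightarrow> \<not> (\<exists>l\<in>LRM n u. x < l \<and> l \<le> y)"
proof -
  let ?I = "LRM' n u"
  have un: "{i\<in>?I. i < y} = {i\<in>?I. i < x} \<union> {i\<in>?I. x \<le> i \<and> i < y}" using assms by auto
  have fin1: "finite {i\<in>?I. i < x}" by simp
  have fin2: "finite {i\<in>?I. x \<le> i \<and> i < y}" by simp
  have "cnt ?I y = cnt ?I x + card {i\<in>?I. x \<le> i \<and> i < y}"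
    unfolding cnt_def un by (rule card_Un_disjoint[OF fin1 fin2]) auto
  then have "cnt ?I x = cnt ?I y \<longleftrightarrow> {i\<in>?I. x \<le> i \<and> i < y} = {}" using fin2 by simp
  also have "\<dots> \<longleftrightarrow> \<not> (\<exists>l\<in>LRM n u. x < l \<and> l \<le> y)"
  proof
    assume e: "{i\<in>?I. x \<le> i \<and> i < y} = {}"
    show "\<not> (\<exists>l\<in>LRM n u. x < l \<and> l \<le> y)"
    proof
      assume "\<exists>l\<in>LRM n u. x < l \<and> l \<le> y"
      then obtain l where l: "l \<in> LRM n u" "x < l" "l \<le> y" by blast
      then have "l - 1 \<in> ?I" using assms by (auto simp: LRM'_def)
      then have "l - 1 \<in> {i\<in>?I. x \<le> i \<and> i < y}" using l by auto
      then show False using e by blast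
    qed
  next
    assume ne: "\<not> (\<exists>l\<in>LRM n u. x < l \<and> l \<le> y)"
    show "{i\<in>?I. x \<le> i \<and> i < y} = {}"
    proof (rule ccontr)
      assume "{i\<in>?I. x \<le> i \<and> i < y} \<noteq> {}"
      then obtain i where i: "i \<in> ?I" "x \<le> i" "i < y" by blast
      then obtain l where l: "l \<in> LRM n u" "l > 1" "i = l - 1" by (auto simp: LRM'_def)
      then show False using ne i by auto
    qed
  qed
  finally show ?thesis .
qed

lemma block_min:
  assumes u: "u permutes {1..n}" and y: "y \<in> {1..n}"
  shows "\<exists>m\<in>{1..n}. m \<in> LRM n u \<and> m \<le> y \<and> cnt (LRM' n u) m = cnt (LRM' n u) y \<and>
     (\<forall>y'\<in>{1..n}. cnt (LRM' n u) y' = cnt (LRM' n u) y \<longrightarrow> m \<le> y' \<and> inv u m \<le> inv u y')"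
proof -
  let ?I = "LRM' n u"
  define M where "M = {l\<in>LRM n u. l \<le> y}"
  have finM: "finite M" using LRM_sub[of n u] finite_subset[of M "{1..n}"] by (auto simp: M_def)
  have neM: "1 \<in> M" using one_LRM[OF u] y by (auto simp: M_def)
  define m where "m = Max M"
  have "M \<noteq> {}" using neM by blast
  then have mM: "m \<in> M" using Max_in[OF finM] by (simp add: m_def)
  have mL: "m \<in> LRM n u" and my: "m \<le> y" using mM by (auto simp: M_def)
  have m1: "m \<in> {1..n}" using mL by (auto simp: LRM_def)
  have maxm: "\<And>l. l \<in> LRM n u \<Longrightarrow> l \<le> y \<Longrightarrow> l \<le> m" using finM by (auto simp: m_def M_def)
  have cm: "cnt ?I m = cnt ?I y"
  proof -
    have "\<not> (\<exists>l\<in>LRM n u. m < l \<and> l \<le> y)" using maxm by force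
    then show ?thesis using cnt_LRM'_eq[of m y n u] m1 my by simp
  qed
  have rest: "m \<le> y' \<and> inv u m \<le> inv u y'" if y': "y' \<in> {1..n}" and cy: "cnt ?I y' = cnt ?I y" for y'
  proof -
    have my': "m \<le> y'"
    proof (rule ccontr)
      assume "\<not> m \<le> y'"
      then have "y' < m" by simp
      then have "cnt ?I y' \<noteq> cnt ?I y" using cnt_LRM'_eq[of y' y n u] y' mL my by auto
      then show False using cy by simp
    qed
    have "inv u m \<le> inv u y'"
    proof (rule ccontr)
      assume "\<not> inv u m \<le> inv u y'"
      then have lt: "inv u y' < inv u m" by simp
      define P where "P = {1..inv u y'}"
      have py': "inv u y' \<in> {1..n}" using permutes_in_image[OF permutes_inv[OF u]] y' by simp
      have finP: "finite (u ` P)" by (simp add: P_def)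
      have neP: "u ` P \<noteq> {}" using py' by (auto simp: P_def)
      define z where "z = Min (u ` P)"
      have zin: "z \<in> u ` P" using Min_in[OF finP neP] by (simp add: z_def)
      then obtain k0 where k0: "k0 \<in> P" "u k0 = z" by blast
      have k0n: "k0 \<in> {1..n}" using k0 py' by (auto simp: P_def)
      have zn: "z \<in> {1..n}" using k0n k0 permutes_in_image[OF u] by auto
      have ik0: "inv u z = k0" using k0 permutes_inv_eq[OF u] by simp
      have zL: "z \<in> LRM n u"
        unfolding LRM_def
      proof (intro CollectI conjI allI impI)
        show "z \<in> {1..n}" by (rule zn)
        fix k assume k: "1 \<le> k \<and> k < inv u z"
        then have kP: "k \<in> P" using ik0 k0 by (auto simp: P_def)
        then have "z \<le> u k" unfolding z_def using finP by simp
        moreover have "u k \<noteq> z"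
        proof
          assume "u k = z"
          then have "k = k0" using k0(2) permutes_inj[OF u] by (auto dest: injD)
          then show False using k ik0 by simp
        qed
        ultimately show "z < u k" by simp
      qed
      have zy': "z \<le> y'"
      proof -
        have "u (inv u y') = y'" using permutes_inverses(1)[OF u] by simp
        moreover have "inv u y' \<in> P" using py' by (simp add: P_def)
        ultimately have "y' \<in> u ` P" by force
        then show ?thesis unfolding z_def using finP by simp
      qed
      have mz: "m < z"
      proof -
        have "1 \<le> k0" "k0 < inv u m" using k0 lt by (auto simp: P_def)
        then have "u k0 > m" by (rule LRM_prop[OF mL])
        then show ?thesis using k0(2) by simp
      qed
      have "cnt ?I m \<noteq> cnt ?I y'" using cnt_LRM'_eq[of m y' n u] m1 my' zL mz zy' by auto
      then show False using cm cy by simp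
    qed
    then show ?thesis using my' by simp
  qed
  show ?thesis using m1 mL my cm rest by blast
qed

lemma diff_block:
  assumes u: "u permutes {1..n}"
    and y1: "y1 \<in> {1..n}" and y2: "y2 \<in> {1..n}" and lt: "y1 < y2"
    and ne: "cnt (LRM' n u) y1 \<noteq> cnt (LRM' n u) y2"
    and m1: "m1 \<in> {1..n}" "m1 \<le> y1" "cnt (LRM' n u) m1 = cnt (LRM' n u) y1"
    and m2: "m2 \<in> LRM n u" "m2 \<le> y2" "cnt (LRM' n u) m2 = cnt (LRM' n u) y2"
  shows "inv u m2 < inv u m1"
proof -
  let ?c = "cnt (LRM' n u)"
  have "y1 < m2"
  proof (rule ccontr)
    assume "\<not> y1 < m2"
    then have "?c m2 \<le> ?c y1" "?c y1 \<le> ?c y2" using lt by (auto intro: cnt_mono)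
    then show False using ne m2 by simp
  qed
  then have m12: "m1 < m2" using m1 by simp
  show ?thesis
  proof (rule ccontr)
    assume "\<not> inv u m2 < inv u m1"
    moreover have "inv u m1 \<noteq> inv u m2" using m12 permutes_inj[OF permutes_inv[OF u]] by (auto dest: injD)
    ultimately have "inv u m1 < inv u m2" by simp
    moreover have "1 \<le> inv u m1" using permutes_in_image[OF permutes_inv[OF u]] m1 by auto
    ultimately have "u (inv u m1) > m2" using LRM_prop[OF m2(1)] by simp
    then show False using m12 permutes_inverses(1)[OF u] by simp
  qed
qed



lemma pi_le_mset:
  assumes m1: "mset lam' = mset lam" and m2: "mset mu' = mset mu" and le: "pi_le lam mu"
  shows "pi_le lam' mu'"
proof -
  obtain f where f1: "\<forall>i < length lam. f i < length mu"
    and f2: "\<forall>j < length mu. mu ! j = (\<Sum>i \<in> {i. i < length lam \<and> f i = j}. lam ! i)"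
    using le unfolding pi_le_def by blast
  obtain p1 where p1: "p1 permutes {..<length lam}" "permute_list p1 lam = lam'"
    using mset_eq_permutation[OF m1] by blast
  obtain p2 where p2: "p2 permutes {..<length mu}" "permute_list p2 mu = mu'"
    using mset_eq_permutation[OF m2] by blast
  have len1: "length lam' = length lam" using p1(2) by auto
  have len2: "length mu' = length mu" using p2(2) by auto
  have nth1: "lam' ! i = lam ! p1 i" if "i < length lam" for i
    using p1 that permute_list_nth by blast
  have nth2: "mu' ! j = mu ! p2 j" if "j < length mu" for j
    using p2 that permute_list_nth by blast
  define f' where "f' i = inv p2 (f (p1 i))" for i
  have ip2: "inv p2 permutes {..<length mu}" by (rule permutes_inv[OF p2(1)])
  show ?thesis unfolding pi_le_def
  proof (intro exI[of _ f'] conjI allI impI)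
    fix i assume i: "i < length lam'"
    then have "p1 i < length lam" using permutes_in_image[OF p1(1)] len1 by simp
    then have "f (p1 i) < length mu" using f1 by simp
    then show "f' i < length mu'" using permutes_in_image[OF ip2] len2 by (simp add: f'_def)
  next
    fix j assume j: "j < length mu'"
    then have j': "j < length mu" using len2 by simp
    have p2j: "p2 j < length mu" using permutes_in_image[OF p2(1)] j' by simp
    have img: "{i. i < length lam \<and> f i = p2 j} = p1 ` {i. i < length lam' \<and> f' i = j}"
    proof
      show "{i. i < length lam \<and> f i = p2 j} \<subseteq> p1 ` {i. i < length lam' \<and> f' i = j}"
      proof
        fix i assume "i \<in> {i. i < length lam \<and> f i = p2 j}"
        then have i: "i < length lam" "f i = p2 j" by auto
        define i' where "i' = inv p1 i"
        have "p1 i' = i" using permutes_inverses(1)[OF p1(1)] by (simp add: i'_def)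
        moreover have "i' < length lam'" using permutes_in_image[OF permutes_inv[OF p1(1)]] i len1 by (simp add: i'_def)
        moreover have "f' i' = j" using \<open>p1 i' = i\<close> i permutes_inverses(2)[OF p2(1)] by (simp add: f'_def)
        ultimately show "i \<in> p1 ` {i. i < length lam' \<and> f' i = j}" by force
      qed
    next
      show "p1 ` {i. i < length lam' \<and> f' i = j} \<subseteq> {i. i < length lam \<and> f i = p2 j}"
      proof
        fix x assume "x \<in> p1 ` {i. i < length lam' \<and> f' i = j}"
        then obtain i where i: "i < length lam'" "f' i = j" "x = p1 i" by blast
        have "p2 (f' i) = f (p1 i)" using permutes_inverses(1)[OF p2(1)] by (simp add: f'_def)
        then have "f x = p2 j" using i by simp
        moreover have "x < length lam" using permutes_in_image[OF p1(1)] i len1 by simp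
        ultimately show "x \<in> {i. i < length lam \<and> f i = p2 j}" by simp
      qed
    qed
    have inj: "inj_on p1 {i. i < length lam' \<and> f' i = j}"
      using permutes_inj_on[OF p1(1)] .
    have "mu' ! j = mu ! p2 j" using nth2 j' by simp
    also have "\<dots> = (\<Sum>i \<in> {i. i < length lam \<and> f i = p2 j}. lam ! i)" using f2 p2j by simp
    also have "\<dots> = (\<Sum>i \<in> {i. i < length lam' \<and> f' i = j}. lam ! p1 i)"
      unfolding img by (rule sum.reindex[OF inj, unfolded comp_def])
    also have "\<dots> = (\<Sum>i \<in> {i. i < length lam' \<and> f' i = j}. lam' ! i)"
      by (rule sum.cong) (simp_all add: nth1 len1)
    finally show "mu' ! j = (\<Sum>i \<in> {i. i < length lam' \<and> f' i = j}. lam' ! i)" .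
  qed
qed

lemma mset_sortdec: "mset (sortdec \<alpha>) = mset \<alpha>"
  by (simp add: sortdec_def)

lemma NN_iff:
  assumes pos: "\<forall>x\<in>set \<beta>. 0 < x"
  shows "x \<in> NN \<beta> \<longleftrightarrow> x \<in> {1..sum_list \<beta>} \<and> (\<exists>y\<in>{1..sum_list \<beta>}. y < x \<and> cnt (SetC \<beta>) y = cnt (SetC \<beta>) x)"
proof
  assume "x \<in> NN \<beta>"
  then obtain i where i: "i < length \<beta>" "x \<in> Bk \<beta> i" "x \<noteq> Min (Bk \<beta> i)" by (auto simp: NN_def)
  define m where "m = Min (Bk \<beta> i)"
  have mB: "m \<in> Bk \<beta> i" using Min_in[OF finite_Bk Bk_ne[OF pos i(1)]] by (simp add: m_def)
  have "m \<le> x" using i(2) by (simp add: m_def)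
  then have "m < x" using i(3) by (simp add: m_def)
  moreover have "cnt (SetC \<beta>) m = cnt (SetC \<beta>) x" using cnt_Bk[OF pos i(1)] mB i(2) by simp
  moreover have "m \<in> {1..sum_list \<beta>}" "x \<in> {1..sum_list \<beta>}" using Bk_sub[OF i(1)] mB i(2) by auto
  ultimately show "x \<in> {1..sum_list \<beta>} \<and> (\<exists>y\<in>{1..sum_list \<beta>}. y < x \<and> cnt (SetC \<beta>) y = cnt (SetC \<beta>) x)"
    by blast
next
  assume h: "x \<in> {1..sum_list \<beta>} \<and> (\<exists>y\<in>{1..sum_list \<beta>}. y < x \<and> cnt (SetC \<beta>) y = cnt (SetC \<beta>) x)"
  then obtain y where y: "y \<in> {1..sum_list \<beta>}" "y < x" "cnt (SetC \<beta>) y = cnt (SetC \<beta>) x" by blast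
  define i where "i = cnt (SetC \<beta>) x"
  have i: "i < length \<beta>" using cnt_lt[OF pos] h by (simp add: i_def)
  have xB: "x \<in> Bk \<beta> i" using Bk_iff[OF pos i] h by (simp add: i_def)
  have yB: "y \<in> Bk \<beta> i" using Bk_iff[OF pos i] y by (simp add: i_def)
  have "Min (Bk \<beta> i) \<le> y" using yB by simp
  then have "x \<noteq> Min (Bk \<beta> i)" using y by simp
  then show "x \<in> NN \<beta>" using xB i by (auto simp: NN_def)
qed

lemma part_a:
  assumes pos: "\<forall>x\<in>set \<beta>. 0 < x" and n: "sum_list \<beta> = n" and w: "w permutes {1..n}"
  shows "actBu n (Vcomp \<beta> :: 'k::comm_ring_1 ncpoly) (SetC \<beta>) w (underline n w) = 1"
proof -
  have id: "w \<circ> inv w = id" using permutes_inv_o(1)[OF w] .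
  have G: "Good n \<beta> (SetC \<beta>) id L \<longleftrightarrow> L = {}" if L: "L \<in> Pow (NN \<beta>)" for L
  proof
    assume g: "Good n \<beta> (SetC \<beta>) id L"
    show "L = {}"
    proof (rule ccontr)
      assume "L \<noteq> {}"
      then obtain x where x: "x \<in> L" by blast
      then have "x \<in> NN \<beta>" using L by blast
      then obtain y where y: "x \<in> {1..n}" "y \<in> {1..n}" "y < x" "cnt (SetC \<beta>) y = cnt (SetC \<beta>) x"
        using NN_iff[OF pos] n by blast
      have yL: "y \<notin> L"
      proof
        assume "y \<in> L"
        then have "y \<in> NN \<beta>" using L by blast
        then obtain z where z: "z \<in> {1..n}" "z < y" "cnt (SetC \<beta>) z = cnt (SetC \<beta>) y"
          using NN_iff[OF pos] n by blast
        show False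
        proof -
          define B where "B = {v\<in>{1..n}. cnt (SetC \<beta>) v = cnt (SetC \<beta>) x}"
          have "finite B" "B \<noteq> {}" using y by (auto simp: B_def)
          define m where "m = Min B"
          have mB: "m \<in> B" using Min_in[OF \<open>finite B\<close> \<open>B \<noteq> {}\<close>] by (simp add: m_def)
          have "\<forall>v\<in>B. m \<le> v" using \<open>finite B\<close> by (simp add: m_def)
          then have "m \<notin> NN \<beta>" using NN_iff[OF pos, of m] n mB by (auto simp: B_def)
          then have "m \<notin> L" using L by blast
          have "m < x" using \<open>\<forall>v\<in>B. m \<le> v\<close> y by (auto simp: B_def)
          then have "ordW \<beta> L m x" using g mB y by (auto simp: Good_def B_def)
          then have "bef L m x" using mB by (simp add: ordW_def B_def)
          then show False using \<open>m \<notin> L\<close> x by (simp add: bef_def)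
        qed
      qed
      have "ordW \<beta> L y x" using g y by (auto simp: Good_def)
      then have "bef L y x" using y by (simp add: ordW_def)
      then show False using yL x by (simp add: bef_def)
    qed
  next
    assume "L = {}"
    then show "Good n \<beta> (SetC \<beta>) id L" by (auto simp: Good_def ordW_def bef_def)
  qed
  have "actBu n (Vcomp \<beta> :: 'k ncpoly) (SetC \<beta>) w (underline n w) =
      (\<Sum>L\<in>Pow (NN \<beta>). if Good n \<beta> (SetC \<beta>) id L then (-1)^card L else 0)"
    using coef_Good[OF pos n w w] id by simp
  also have "\<dots> = (\<Sum>L\<in>Pow (NN \<beta>). if L = {} then 1 else 0)"
    by (rule sum.cong) (simp_all add: G)
  also have "\<dots> = 1"
  proof -
    have "finite (NN \<beta>)" by (simp add: NN_def)
    then show ?thesis by simp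
  qed
  finally show ?thesis .
qed

lemma sum_invol:
  assumes fin: "finite N" and e: "e \<in> N" and inv: "\<And>L. L \<subseteq> N - {e} \<Longrightarrow> G (insert e L) = G L"
  shows "(\<Sum>L\<in>Pow N. if G L then (-1)^card L else (0::'k::comm_ring_1)) = 0"
proof -
  define A where "A = N - {e}"
  have NA: "N = insert e A" using e by (auto simp: A_def)
  have eA: "e \<notin> A" by (simp add: A_def)
  have finA: "finite A" using fin by (simp add: A_def)
  have disj: "Pow A \<inter> insert e ` Pow A = {}" using eA by auto
  have inj: "inj_on (insert e) (Pow A)" using eA by (auto simp: inj_on_def)
  have "(\<Sum>L\<in>Pow N. if G L then (-1)^card L else (0::'k)) =
     (\<Sum>L\<in>Pow A. if G L then (-1)^card L else 0) + (\<Sum>L\<in>insert e ` Pow A. if G L then (-1)^card L else 0)"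
    unfolding NA Pow_insert using finA disj by (intro sum.union_disjoint) auto
  also have "(\<Sum>L\<in>insert e ` Pow A. if G L then (-1)^card L else (0::'k)) =
      (\<Sum>L\<in>Pow A. if G L then - ((-1)^card L) else 0)"
  proof (subst sum.reindex[OF inj], rule sum.cong)
    fix L assume "L \<in> Pow A"
    then have "L \<subseteq> N - {e}" "e \<notin> L" "finite L" using finA by (auto simp: A_def intro: finite_subset)
    then show "((\<lambda>L. if G L then (-1)^card L else (0::'k)) \<circ> insert e) L = (if G L then - ((-1)^card L) else 0)"
      using inv by simp
  qed simp
  also have "(\<Sum>L\<in>Pow A. if G L then - ((-1)^card L) else (0::'k)) = - (\<Sum>L\<in>Pow A. if G L then (-1)^card L else 0)"
    unfolding sum_negf[symmetric] by (rule sum.cong) auto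
  finally show ?thesis by simp
qed

lemma bef_ins_other: "a \<noteq> e \<Longrightarrow> b \<noteq> e \<Longrightarrow> bef (insert e L) a b = bef L a b"
  by (auto simp: bef_def)

lemma bef_ins_left: "e \<notin> L \<Longrightarrow> e < b \<Longrightarrow> bef (insert e L) e b = bef L e b"
  by (auto simp: bef_def)

lemma bef_ins_right: "e \<notin> L \<Longrightarrow> e < a \<Longrightarrow> bef (insert e L) a e = bef L a e"
  by (auto simp: bef_def)



lemma caseA:
  assumes pos: "\<forall>x\<in>set \<beta>. 0 < x" and n: "sum_list \<beta> = n" and g: "g permutes {1..n}"
    and ex: "\<exists>a\<in>{1..n}. \<exists>b\<in>{1..n}. cnt (SetC \<beta>) a = cnt (SetC \<beta>) b \<and> cnt I (inv g a) \<noteq> cnt I (inv g b)"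
  shows "(\<Sum>L\<in>Pow (NN \<beta>). if Good n \<beta> I g L then (-1)^card L else (0::'k::comm_ring_1)) = 0"
proof -
  let ?cb = "cnt (SetC \<beta>)"
  define lab where "lab x = cnt I (inv g x)" for x
  obtain a b where a: "a \<in> {1..n}" and b: "b \<in> {1..n}" and cab: "?cb a = ?cb b" and lab_ab: "lab a \<noteq> lab b"
    using ex by (auto simp: lab_def)
  define B where "B = {x\<in>{1..n}. ?cb x = ?cb a}"
  have finB: "finite B" by (simp add: B_def)
  have aB: "a \<in> B" and bB: "b \<in> B" using a b cab by (auto simp: B_def)
  have neB: "B \<noteq> {}" using aB by blast
  define m where "m = Min B"
  have mB: "m \<in> B" using Min_in[OF finB neB] by (simp add: m_def)
  have mmin: "\<forall>x\<in>B. m \<le> x" using finB by (simp add: m_def)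
  obtain a0 where a0B: "a0 \<in> B" and a0m: "lab a0 \<noteq> lab m"
  proof (cases "lab a = lab m")
    case True
    then show ?thesis using that[of b] bB lab_ab by simp
  next
    case False
    then show ?thesis using that[of a] aB by simp
  qed
  define E where "E = {x\<in>B. lab x = lab a0}"
  have finE: "finite E" using finB by (simp add: E_def)
  have neE: "E \<noteq> {}" using a0B by (auto simp: E_def)
  define e where "e = Min E"
  have eE: "e \<in> E" using Min_in[OF finE neE] by (simp add: e_def)
  have emin: "\<forall>x\<in>E. e \<le> x" using finE by (simp add: e_def)
  have eB: "e \<in> B" using eE by (simp add: E_def)
  have em: "m < e"
  proof -
    have "m \<le> e" using mmin eB by simp
    moreover have "e \<noteq> m" using eE a0m by (auto simp: E_def)
    ultimately show ?thesis by simp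
  qed
  have eNN: "e \<in> NN \<beta>"
    unfolding NN_iff[OF pos] n using eB mB em by (auto simp: B_def)
  have finNN: "finite (NN \<beta>)" by (simp add: NN_def)
  show ?thesis
  proof (rule sum_invol[OF finNN eNN])
    fix L assume L: "L \<subseteq> NN \<beta> - {e}"
    then have eL: "e \<notin> L" by blast
    show "Good n \<beta> I g (insert e L) = Good n \<beta> I g L"
      unfolding Good_def
    proof (intro ball_cong refl imp_cong)
      fix j j' assume j: "j \<in> {1..n}" and j': "j' \<in> {1..n}" and h: "j < j' \<and> cnt I j = cnt I j'"
      define A where "A = g j"
      define C where "C = g j'"
      have AC: "A \<noteq> C" using h permutes_inj[OF g] by (auto simp: A_def C_def dest: injD)
      have An: "A \<in> {1..n}" "C \<in> {1..n}" using permutes_in_image[OF g] j j' by (auto simp: A_def C_def)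
      have labA: "lab A = cnt I j" using permutes_inverses(2)[OF g] by (simp add: lab_def A_def)
      have labC: "lab C = cnt I j'" using permutes_inverses(2)[OF g] by (simp add: lab_def C_def)
      have key: "bef (insert e L) A C = bef L A C" if cc: "?cb A = ?cb C"
      proof (cases "A = e")
        case True
        have "C \<in> E" using An cc True eE labA labC h by (auto simp: E_def B_def)
        then have "e < C" using emin AC True by force
        then show ?thesis using True bef_ins_left[OF eL] by simp
      next
        case False
        show ?thesis
        proof (cases "C = e")
          case True
          have "A \<in> E" using An cc True eE labA labC h by (auto simp: E_def B_def)
          then have "e < A" using emin AC True by force
          then show ?thesis using True bef_ins_right[OF eL] by simp
        next
          case False
          then show ?thesis using \<open>A \<noteq> e\<close> bef_ins_other by simp
        qed
      qed
      show "ordW \<beta> (insert e L) (g j) (g j') = ordW \<beta> L (g j) (g j')"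
        using key unfolding A_def C_def ordW_def by auto
    qed
  qed
qed

lemma caseB:
  assumes posb: "\<forall>x\<in>set \<beta>. 0 < x" and nb: "sum_list \<beta> = n"
    and posg: "\<forall>x\<in>set \<gamma>. 0 < x" and ng: "sum_list \<gamma> = n"
    and g: "g permutes {1..n}"
    and mono: "\<forall>a\<in>{1..n}. \<forall>b\<in>{1..n}. cnt (SetC \<beta>) a = cnt (SetC \<beta>) b \<longrightarrow> cnt (SetC \<gamma>) (inv g a) = cnt (SetC \<gamma>) (inv g b)"
  shows "\<exists>f. (\<forall>i<length \<beta>. f i < length \<gamma>) \<and>
     (\<forall>j<length \<gamma>. \<gamma> ! j = (\<Sum>i\<in>{i. i < length \<beta> \<and> f i = j}. \<beta> ! i)) \<and>
     (\<forall>x\<in>{1..n}. cnt (SetC \<gamma>) (inv g x) = f (cnt (SetC \<beta>) x))"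
proof -
  let ?cb = "cnt (SetC \<beta>)" and ?cg = "cnt (SetC \<gamma>)"
  define lab where "lab x = ?cg (inv g x)" for x
  define f where "f i = lab (psum \<beta> i + 1)" for i
  have ig: "inv g permutes {1..n}" by (rule permutes_inv[OF g])
  have minB: "psum \<beta> i + 1 \<in> Bk \<beta> i" if "i < length \<beta>" for i
    using Min_in[OF finite_Bk Bk_ne[OF posb that]] Min_Bk[OF posb that] by simp
  have labf: "lab x = f (?cb x)" if x: "x \<in> {1..n}" for x
  proof -
    define i where "i = ?cb x"
    have i: "i < length \<beta>" using cnt_lt[OF posb] x nb by (simp add: i_def)
    have "psum \<beta> i + 1 \<in> {1..n}" using Bk_sub[OF i] minB[OF i] nb by auto
    moreover have "?cb (psum \<beta> i + 1) = i" using cnt_Bk[OF posb i minB[OF i]] .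
    moreover have "?cb x = i" by (simp add: i_def)
    ultimately have "?cg (inv g x) = ?cg (inv g (psum \<beta> i + 1))"
      using mono x by metis
    then show ?thesis by (simp add: f_def lab_def i_def)
  qed
  have f1: "\<forall>i<length \<beta>. f i < length \<gamma>"
  proof (intro allI impI)
    fix i assume i: "i < length \<beta>"
    have "psum \<beta> i + 1 \<in> {1..n}" using Bk_sub[OF i] minB[OF i] nb by auto
    then have "inv g (psum \<beta> i + 1) \<in> {1..sum_list \<gamma>}" using permutes_in_image[OF ig] ng by simp
    then show "f i < length \<gamma>" using cnt_lt[OF posg] by (simp add: f_def lab_def)
  qed
  have f2: "\<forall>j<length \<gamma>. \<gamma> ! j = (\<Sum>i\<in>{i. i < length \<beta> \<and> f i = j}. \<beta> ! i)"
  proof (intro allI impI)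
    fix j assume j: "j < length \<gamma>"
    define X where "X = {x\<in>{1..n}. lab x = j}"
    define S where "S = {i. i < length \<beta> \<and> f i = j}"
    have "Bk \<gamma> j = inv g ` X"
    proof
      show "Bk \<gamma> j \<subseteq> inv g ` X"
      proof
        fix y assume "y \<in> Bk \<gamma> j"
        then have y: "y \<in> {1..n}" "?cg y = j" using Bk_iff[OF posg j] ng by auto
        have "g y \<in> {1..n}" using permutes_in_image[OF g] y by simp
        moreover have "lab (g y) = j" using y permutes_inverses(2)[OF g] by (simp add: lab_def)
        ultimately have "g y \<in> X" by (simp add: X_def)
        moreover have "inv g (g y) = y" using permutes_inverses(2)[OF g] by simp
        ultimately show "y \<in> inv g ` X" by force
      qed
    next
      show "inv g ` X \<subseteq> Bk \<gamma> j"
      proof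
        fix y assume "y \<in> inv g ` X"
        then obtain x where x: "x \<in> X" "y = inv g x" by blast
        then have "y \<in> {1..n}" using permutes_in_image[OF ig] by (simp add: X_def)
        moreover have "?cg y = j" using x by (simp add: X_def lab_def)
        ultimately show "y \<in> Bk \<gamma> j" using Bk_iff[OF posg j] ng by simp
      qed
    qed
    then have "\<gamma> ! j = card (inv g ` X)" using card_Bk[OF j] by simp
    also have "\<dots> = card X" by (rule card_image) (rule permutes_inj_on[OF ig])
    also have "X = (\<Union>i\<in>S. Bk \<beta> i)"
    proof
      show "X \<subseteq> (\<Union>i\<in>S. Bk \<beta> i)"
      proof
        fix x assume x: "x \<in> X"
        define i where "i = ?cb x"
        have xn: "x \<in> {1..n}" using x by (simp add: X_def)
        have i: "i < length \<beta>" using cnt_lt[OF posb] xn nb by (simp add: i_def)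
        have "x \<in> Bk \<beta> i" using Bk_iff[OF posb i] xn nb by (simp add: i_def)
        moreover have "f i = j" using labf[OF xn] x by (simp add: X_def i_def)
        ultimately show "x \<in> (\<Union>i\<in>S. Bk \<beta> i)" using i by (auto simp: S_def)
      qed
    next
      show "(\<Union>i\<in>S. Bk \<beta> i) \<subseteq> X"
      proof
        fix x assume "x \<in> (\<Union>i\<in>S. Bk \<beta> i)"
        then obtain i where i: "i \<in> S" "x \<in> Bk \<beta> i" by blast
        then have il: "i < length \<beta>" "f i = j" by (auto simp: S_def)
        have xn: "x \<in> {1..n}" and cx: "?cb x = i" using Bk_iff[OF posb il(1)] i(2) nb by auto
        have "lab x = j" using labf[OF xn] cx il by simp
        then show "x \<in> X" using xn by (simp add: X_def)
      qed
    qed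
    also have "card (\<Union>i\<in>S. Bk \<beta> i) = (\<Sum>i\<in>S. card (Bk \<beta> i))"
    proof (rule card_UN_disjoint)
      show "finite S" by (simp add: S_def)
      show "\<forall>i\<in>S. finite (Bk \<beta> i)" by simp
      show "\<forall>i\<in>S. \<forall>i'\<in>S. i \<noteq> i' \<longrightarrow> Bk \<beta> i \<inter> Bk \<beta> i' = {}"
        using Bk_disj[OF posb] by (auto simp: S_def)
    qed
    also have "\<dots> = (\<Sum>i\<in>S. \<beta> ! i)" by (rule sum.cong) (auto simp: S_def card_Bk)
    finally show "\<gamma> ! j = (\<Sum>i\<in>{i. i < length \<beta> \<and> f i = j}. \<beta> ! i)" by (simp add: S_def)
  qed
  have f3: "\<forall>x\<in>{1..n}. ?cg (inv g x) = f (?cb x)" using labf by (simp add: lab_def)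
  show ?thesis using f1 f2 f3 by blast
qed

lemma f_inj:
  fixes \<beta> \<gamma> :: "nat list"
  assumes posg: "\<forall>x\<in>set \<gamma>. 0 < x" and len: "length \<beta> = length \<gamma>"
    and f1: "\<forall>i<length \<beta>. f i < length \<gamma>"
    and f2: "\<forall>j<length \<gamma>. \<gamma> ! j = (\<Sum>i\<in>{i. i < length \<beta> \<and> f i = j}. \<beta> ! i)"
  shows "inj_on f {..<length \<beta>}"
proof (rule eq_card_imp_inj_on)
  show "finite {..<length \<beta>}" by simp
  have "f ` {..<length \<beta>} = {..<length \<beta>}"
  proof
    show "f ` {..<length \<beta>} \<subseteq> {..<length \<beta>}" using f1 len by auto
    show "{..<length \<beta>} \<subseteq> f ` {..<length \<beta>}"
    proof
      fix j assume "j \<in> {..<length \<beta>}"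
      then have j: "j < length \<gamma>" using len by simp
      have "0 < \<gamma> ! j" by (rule pos_nth[OF posg j])
      have "{i. i < length \<beta> \<and> f i = j} \<noteq> {}"
      proof
        assume e: "{i. i < length \<beta> \<and> f i = j} = {}"
        have "\<gamma> ! j = (\<Sum>i\<in>{i. i < length \<beta> \<and> f i = j}. \<beta> ! i)" using f2 j by blast
        then have "\<gamma> ! j = 0" unfolding e by simp
        then show False using \<open>0 < \<gamma> ! j\<close> by simp
      qed
      then obtain i where "i < length \<beta>" "f i = j" by blast
      then show "j \<in> f ` {..<length \<beta>}" by auto
    qed
  qed
  then show "card (f ` {..<length \<beta>}) = card {..<length \<beta>}" by simp
qed

lemma perm_order_eq:
  fixes u w :: "nat \<Rightarrow> nat"
  assumes u: "u permutes {1..n}" and w: "w permutes {1..n}"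
    and ord: "\<forall>p\<in>{1..n}. \<forall>q\<in>{1..n}. u p < u q \<longleftrightarrow> w p < w q"
  shows "u = w"
proof
  fix p
  show "u p = w p"
  proof (cases "p \<in> {1..n}")
    case False
    then show ?thesis using permutes_not_in[OF u] permutes_not_in[OF w] by simp
  next
    case True
    have cardv: "card {q\<in>{1..n}. v q \<le> v p} = v p" if v: "v permutes {1..n}" for v :: "nat \<Rightarrow> nat"
    proof -
      define S where "S = {q\<in>{1..n}. v q \<le> v p}"
      have vp: "v p \<in> {1..n}" using permutes_in_image[OF v] True by simp
      have "v ` S = {1..v p}"
      proof
        show "v ` S \<subseteq> {1..v p}"
        proof
          fix z assume "z \<in> v ` S"
          then obtain q where q: "q \<in> S" "z = v q" by blast
          then have "v q \<in> {1..n}" using permutes_in_image[OF v] by (simp add: S_def)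
          then show "z \<in> {1..v p}" using q by (simp add: S_def)
        qed
        show "{1..v p} \<subseteq> v ` S"
        proof
          fix y assume y: "y \<in> {1..v p}"
          then have yn: "y \<in> {1..n}" using vp by simp
          have "inv v y \<in> {1..n}" using permutes_in_image[OF permutes_inv[OF v]] yn by simp
          moreover have vy: "v (inv v y) = y" using permutes_inverses(1)[OF v] by simp
          ultimately have "inv v y \<in> S" using y by (simp add: S_def)
          then show "y \<in> v ` S" using image_eqI[of y v "inv v y" S] vy by simp
        qed
      qed
      moreover have "card (v ` S) = card S" by (rule card_image) (rule permutes_inj_on[OF v])
      ultimately show ?thesis by (simp add: S_def)
    qed
    have "{q\<in>{1..n}. u q \<le> u p} = {q\<in>{1..n}. w q \<le> w p}"
    proof (intro Collect_cong conj_cong refl)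
      fix q assume q: "q \<in> {1..n}"
      have "u q = u p \<longleftrightarrow> q = p" using permutes_inj[OF u] by (auto dest: injD)
      moreover have "w q = w p \<longleftrightarrow> q = p" using permutes_inj[OF w] by (auto dest: injD)
      moreover have "u q < u p \<longleftrightarrow> w q < w p" using ord q True by simp
      ultimately show "u q \<le> u p \<longleftrightarrow> w q \<le> w p" by linarith
    qed
    then show ?thesis using cardv[OF u] cardv[OF w] by simp
  qed
qed



lemma first_pos:
  fixes w u :: "nat \<Rightarrow> nat"
  assumes w: "w permutes {1..n}" and u: "u permutes {1..n}" and p: "p \<in> {1..n}"
    and H: "\<forall>p\<in>{1..n}. \<forall>q\<in>{1..n}. cnt (LRM' n w) (w p) = cnt (LRM' n w) (w q) \<longleftrightarrow> cnt (LRM' n u) (u p) = cnt (LRM' n u) (u q)"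
  shows "\<exists>p0\<in>{1..n}. u p0 \<in> LRM n u \<and> cnt (LRM' n u) (u p0) = cnt (LRM' n u) (u p) \<and>
     w p0 \<in> LRM n w \<and> cnt (LRM' n w) (w p0) = cnt (LRM' n w) (w p) \<and>
     (\<forall>q\<in>{1..n}. cnt (LRM' n u) (u q) = cnt (LRM' n u) (u p) \<longrightarrow> p0 \<le> q \<and> u p0 \<le> u q) \<and>
     (\<forall>q\<in>{1..n}. cnt (LRM' n w) (w q) = cnt (LRM' n w) (w p) \<longrightarrow> w p0 \<le> w q)"
proof -
  let ?cu = "cnt (LRM' n u)" and ?cw = "cnt (LRM' n w)"
  have up: "u p \<in> {1..n}" using permutes_in_image[OF u] p by simp
  have wp: "w p \<in> {1..n}" using permutes_in_image[OF w] p by simp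
  obtain m where m: "m \<in> {1..n}" "m \<in> LRM n u" "m \<le> u p" "?cu m = ?cu (u p)"
    and mm: "\<forall>y'\<in>{1..n}. ?cu y' = ?cu (u p) \<longrightarrow> m \<le> y' \<and> inv u m \<le> inv u y'"
    using block_min[OF u up] by blast
  obtain m' where m': "m' \<in> {1..n}" "m' \<in> LRM n w" "m' \<le> w p" "?cw m' = ?cw (w p)"
    and mm': "\<forall>y'\<in>{1..n}. ?cw y' = ?cw (w p) \<longrightarrow> m' \<le> y' \<and> inv w m' \<le> inv w y'"
    using block_min[OF w wp] by blast
  define p0 where "p0 = inv u m"
  define p0' where "p0' = inv w m'"
  have p0n: "p0 \<in> {1..n}" using permutes_in_image[OF permutes_inv[OF u]] m(1) by (simp add: p0_def)
  have p0'n: "p0' \<in> {1..n}" using permutes_in_image[OF permutes_inv[OF w]] m'(1) by (simp add: p0'_def)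
  have up0: "u p0 = m" using permutes_inverses(1)[OF u] by (simp add: p0_def)
  have wp0': "w p0' = m'" using permutes_inverses(1)[OF w] by (simp add: p0'_def)
  have uclass: "p0 \<le> q \<and> u p0 \<le> u q" if q: "q \<in> {1..n}" "?cu (u q) = ?cu (u p)" for q
  proof -
    have uq: "u q \<in> {1..n}" using permutes_in_image[OF u] q(1) by simp
    have "m \<le> u q \<and> inv u m \<le> inv u (u q)" using mm uq q(2) by blast
    then show ?thesis using permutes_inverses(2)[OF u] up0 by (simp add: p0_def)
  qed
  have wclass: "p0' \<le> q \<and> w p0' \<le> w q" if q: "q \<in> {1..n}" "?cw (w q) = ?cw (w p)" for q
  proof -
    have wq: "w q \<in> {1..n}" using permutes_in_image[OF w] q(1) by simp
    have "m' \<le> w q \<and> inv w m' \<le> inv w (w q)" using mm' wq q(2) by blast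
    then show ?thesis using permutes_inverses(2)[OF w] wp0' by (simp add: p0'_def)
  qed
  have "?cw (w p0) = ?cw (w p)" using H p0n p up0 m(4) by metis
  then have le1: "p0' \<le> p0" using wclass[OF p0n] by simp
  have "?cu (u p0') = ?cu (u p)" using H p0'n p wp0' m'(4) by metis
  then have le2: "p0 \<le> p0'" using uclass[OF p0'n] by simp
  have eq: "p0 = p0'" using le1 le2 by simp
  show ?thesis
  proof (intro bexI[of _ p0] conjI)
    show "p0 \<in> {1..n}" by (rule p0n)
    show "u p0 \<in> LRM n u" using up0 m(2) by simp
    show "?cu (u p0) = ?cu (u p)" using up0 m(4) by simp
    show "w p0 \<in> LRM n w" using eq wp0' m'(2) by simp
    show "?cw (w p0) = ?cw (w p)" using eq wp0' m'(4) by simp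
    show "\<forall>q\<in>{1..n}. ?cu (u q) = ?cu (u p) \<longrightarrow> p0 \<le> q \<and> u p0 \<le> u q" using uclass by blast
    show "\<forall>q\<in>{1..n}. ?cw (w q) = ?cw (w p) \<longrightarrow> w p0 \<le> w q" using wclass eq by blast
  qed
qed

lemma final_eq:
  fixes w u :: "nat \<Rightarrow> nat"
  assumes w: "w permutes {1..n}" and u: "u permutes {1..n}"
    and pos: "\<forall>x\<in>set \<beta>. 0 < x" and nb: "sum_list \<beta> = n" and sb: "SetC \<beta> = LRM' n w"
    and L: "L \<subseteq> NN \<beta>"
    and H: "\<forall>p\<in>{1..n}. \<forall>q\<in>{1..n}. cnt (LRM' n w) (w p) = cnt (LRM' n w) (w q) \<longleftrightarrow> cnt (LRM' n u) (u p) = cnt (LRM' n u) (u q)"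
    and G: "Good n \<beta> (LRM' n u) (w \<circ> inv u) L"
  shows "u = w"
proof -
  let ?cu = "cnt (LRM' n u)" and ?cw = "cnt (LRM' n w)"
  have uin: "\<And>p. p \<in> {1..n} \<Longrightarrow> u p \<in> {1..n}" using permutes_in_image[OF u] by simp
  have win: "\<And>p. p \<in> {1..n} \<Longrightarrow> w p \<in> {1..n}" using permutes_in_image[OF w] by simp
  have gu: "\<And>q. (w \<circ> inv u) (u q) = w q" using permutes_inverses(2)[OF u] by simp
  have Gq: "bef L (w p) (w q)"
    if p: "p \<in> {1..n}" and q: "q \<in> {1..n}" and lt: "u p < u q" and cu: "?cu (u p) = ?cu (u q)"
       and cw: "?cw (w p) = ?cw (w q)" for p q
  proof -
    have "ordW \<beta> L ((w \<circ> inv u) (u p)) ((w \<circ> inv u) (u q))"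
      using G uin[OF p] uin[OF q] lt cu unfolding Good_def by blast
    then have "ordW \<beta> L (w p) (w q)" by (simp only: gu)
    then show ?thesis using cw sb by (simp add: ordW_def)
  qed
  have notL: "w q \<notin> L" if p: "p \<in> {1..n}" and q: "q \<in> {1..n}" and cw: "?cw (w q) = ?cw (w p)" for p q
  proof -
    obtain p0 where p0: "p0 \<in> {1..n}" "?cu (u p0) = ?cu (u p)" "?cw (w p0) = ?cw (w p)"
      and uc: "\<forall>q\<in>{1..n}. ?cu (u q) = ?cu (u p) \<longrightarrow> p0 \<le> q \<and> u p0 \<le> u q"
      and wc: "\<forall>q\<in>{1..n}. ?cw (w q) = ?cw (w p) \<longrightarrow> w p0 \<le> w q"
      using first_pos[OF w u p H] by blast
    have p0L: "w p0 \<notin> L"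
    proof
      assume "w p0 \<in> L"
      then have "w p0 \<in> NN \<beta>" using L by blast
      then obtain y where y: "y \<in> {1..n}" "y < w p0" "?cw y = ?cw (w p0)"
        using NN_iff[OF pos] nb sb by auto
      define q' where "q' = inv w y"
      have q': "q' \<in> {1..n}" "w q' = y"
        using permutes_in_image[OF permutes_inv[OF w]] y(1) permutes_inverses(1)[OF w] by (auto simp: q'_def)
      have "?cw (w q') = ?cw (w p)" using q'(2) y(3) p0(3) by simp
      then have "w p0 \<le> w q'" using wc q'(1) by blast
      then show False using q' y(2) by simp
    qed
    show ?thesis
    proof (cases "w q = w p0")
      case True
      then show ?thesis using p0L by simp
    next
      case False
      then have qp0: "q \<noteq> p0" by auto
      have cuq: "?cu (u q) = ?cu (u p)" using H p q cw by metis
      have "u p0 \<le> u q" using uc q cuq by simp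
      moreover have "u p0 \<noteq> u q" using qp0 permutes_inj[OF u] by (auto dest: injD)
      ultimately have lt: "u p0 < u q" by simp
      have "bef L (w p0) (w q)" using Gq[OF p0(1) q lt] cuq p0 cw by simp
      then show ?thesis using p0L by (simp add: bef_def)
    qed
  qed
  have fwd: "w p < w q" if p: "p \<in> {1..n}" and q: "q \<in> {1..n}" and lt: "u p < u q" for p q
  proof (cases "?cu (u p) = ?cu (u q)")
    case True
    then have cw: "?cw (w p) = ?cw (w q)" using H p q by metis
    have "bef L (w p) (w q)" using Gq[OF p q lt True cw] .
    moreover have "w p \<notin> L" using notL[OF p p] by simp
    moreover have "w q \<notin> L" using notL[OF p q] cw by simp
    ultimately show ?thesis by (simp add: bef_def)
  next
    case False
    then have cw: "?cw (w p) \<noteq> ?cw (w q)" using H p q by metis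
    obtain p0 where p0: "p0 \<in> {1..n}" "u p0 \<in> LRM n u" "?cu (u p0) = ?cu (u p)" "w p0 \<in> LRM n w" "?cw (w p0) = ?cw (w p)"
      and uc: "\<forall>q'\<in>{1..n}. ?cu (u q') = ?cu (u p) \<longrightarrow> p0 \<le> q' \<and> u p0 \<le> u q'"
      and wc: "\<forall>q'\<in>{1..n}. ?cw (w q') = ?cw (w p) \<longrightarrow> w p0 \<le> w q'"
      using first_pos[OF w u p H] by blast
    obtain q0 where q0: "q0 \<in> {1..n}" "u q0 \<in> LRM n u" "?cu (u q0) = ?cu (u q)" "w q0 \<in> LRM n w" "?cw (w q0) = ?cw (w q)"
      and uc': "\<forall>q'\<in>{1..n}. ?cu (u q') = ?cu (u q) \<longrightarrow> q0 \<le> q' \<and> u q0 \<le> u q'"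
      and wc': "\<forall>q'\<in>{1..n}. ?cw (w q') = ?cw (w q) \<longrightarrow> w q0 \<le> w q'"
      using first_pos[OF w u q H] by blast
    have up0: "u p0 \<le> u p" using uc p by simp
    have uq0: "u q0 \<le> u q" using uc' q by simp
    have wp0: "w p0 \<le> w p" using wc p by simp
    have wq0: "w q0 \<le> w q" using wc' q by simp
    have "inv u (u q0) < inv u (u p0)"
      by (rule diff_block[OF u uin[OF p] uin[OF q] lt False uin[OF p0(1)] up0 p0(3) q0(2) uq0 q0(3)])
    then have qp: "q0 < p0" using permutes_inverses(2)[OF u] by simp
    show ?thesis
    proof (rule ccontr)
      assume "\<not> w p < w q"
      moreover have "w p \<noteq> w q" using cw by auto
      ultimately have wlt: "w q < w p" by simp
      have "inv w (w p0) < inv w (w q0)"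
        by (rule diff_block[OF w win[OF q] win[OF p] wlt cw[symmetric] win[OF q0(1)] wq0 q0(5) p0(4) wp0 p0(5)])
      then have "p0 < q0" using permutes_inverses(2)[OF w] by simp
      then show False using qp by simp
    qed
  qed
  have "\<forall>p\<in>{1..n}. \<forall>q\<in>{1..n}. u p < u q \<longleftrightarrow> w p < w q"
  proof (intro ballI iffI)
    fix p q assume "p \<in> {1..n}" "q \<in> {1..n}" "u p < u q"
    then show "w p < w q" using fwd by blast
  next
    fix p q assume p: "p \<in> {1..n}" and q: "q \<in> {1..n}" and wl: "w p < w q"
    show "u p < u q"
    proof (rule ccontr)
      assume "\<not> u p < u q"
      moreover have "u p \<noteq> u q" using wl permutes_inj[OF u] by (auto dest: injD)
      ultimately have "u q < u p" by simp
      then have "w q < w p" using fwd q p by blast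
      then show False using wl by simp
    qed
  qed
  then show ?thesis by (rule perm_order_eq[OF u w])
qed

theorem lemma5p3:
  fixes n :: nat and w u :: "nat \<Rightarrow> nat"
  assumes "w permutes {1..n}" and "u permutes {1..n}"
  defines "\<beta> \<equiv> cLRM' n w" and "\<gamma> \<equiv> cLRM' n u"
  shows "actBu n (Vcomp \<beta> :: 'k::comm_ring_1 ncpoly) (SetC \<beta>) w (underline n w) = 1 \<and>
         (u \<noteq> w \<longrightarrow> \<not> pi_less (sortdec \<beta>) (sortdec \<gamma>) \<longrightarrow>
         actBu n (Vcomp \<beta> :: 'k::comm_ring_1 ncpoly) (SetC \<gamma>) u (underline n w) = 0)"
proof -
  note w = assms(1) and u = assms(2)
  have cb: "(\<forall>x\<in>set \<beta>. 0 < x) \<and> sum_list \<beta> = n \<and> SetC \<beta> = LRM' n w"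
    unfolding \<beta>_def cLRM'_def by (rule Comp_props[OF LRM'_sub])
  have cg: "(\<forall>x\<in>set \<gamma>. 0 < x) \<and> sum_list \<gamma> = n \<and> SetC \<gamma> = LRM' n u"
    unfolding \<gamma>_def cLRM'_def by (rule Comp_props[OF LRM'_sub])
  have posb: "\<forall>x\<in>set \<beta>. 0 < x" and nb: "sum_list \<beta> = n" and sb: "SetC \<beta> = LRM' n w" using cb by auto
  have posg: "\<forall>x\<in>set \<gamma>. 0 < x" and ng: "sum_list \<gamma> = n" and sg: "SetC \<gamma> = LRM' n u" using cg by auto
  have A: "actBu n (Vcomp \<beta> :: 'k ncpoly) (SetC \<beta>) w (underline n w) = 1"
    by (rule part_a[OF posb nb w])
  have B: "actBu n (Vcomp \<beta> :: 'k ncpoly) (SetC \<gamma>) u (underline n w) = 0"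
    if uw: "u \<noteq> w" and npl: "\<not> pi_less (sortdec \<beta>) (sortdec \<gamma>)"
  proof -
    define g where "g = w \<circ> inv u"
    have g: "g permutes {1..n}" unfolding g_def by (rule permutes_compose[OF permutes_inv[OF u] w])
    have ig: "inv g = u \<circ> inv w"
    proof -
      have "inv g = inv (inv u) \<circ> inv w"
        unfolding g_def by (rule o_inv_distrib) (simp_all add: permutes_bij[OF w] permutes_bij[OF permutes_inv[OF u]])
      then show ?thesis using permutes_inv_inv[OF u] by simp
    qed
    have igw: "inv g (w p) = u p" for p using ig permutes_inverses(2)[OF w] by simp
    have coef: "actBu n (Vcomp \<beta> :: 'k ncpoly) (SetC \<gamma>) u (underline n w) =
        (\<Sum>L\<in>Pow (NN \<beta>). if Good n \<beta> (SetC \<gamma>) g L then (-1)^card L else 0)"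
      unfolding g_def by (rule coef_Good[OF posb nb w u])
    show ?thesis
    proof (cases "\<exists>a\<in>{1..n}. \<exists>b\<in>{1..n}. cnt (SetC \<beta>) a = cnt (SetC \<beta>) b \<and> cnt (SetC \<gamma>) (inv g a) \<noteq> cnt (SetC \<gamma>) (inv g b)")
      case True
      show ?thesis unfolding coef by (rule caseA[OF posb nb g True])
    next
      case False
      then have mono: "\<forall>a\<in>{1..n}. \<forall>b\<in>{1..n}. cnt (SetC \<beta>) a = cnt (SetC \<beta>) b \<longrightarrow> cnt (SetC \<gamma>) (inv g a) = cnt (SetC \<gamma>) (inv g b)"
        by blast
      obtain f where f1: "\<forall>i<length \<beta>. f i < length \<gamma>"
        and f2: "\<forall>j<length \<gamma>. \<gamma> ! j = (\<Sum>i\<in>{i. i < length \<beta> \<and> f i = j}. \<beta> ! i)"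
        and f3: "\<forall>x\<in>{1..n}. cnt (SetC \<gamma>) (inv g x) = f (cnt (SetC \<beta>) x)"
        using caseB[OF posb nb posg ng g mono] by blast
      have "pi_le \<beta> \<gamma>" unfolding pi_le_def using f1 f2 by blast
      then have "pi_le (sortdec \<beta>) (sortdec \<gamma>)" by (rule pi_le_mset[OF mset_sortdec mset_sortdec])
      then have "sortdec \<beta> = sortdec \<gamma>" using npl by (simp add: pi_less_def)
      then have "mset \<beta> = mset \<gamma>" using mset_sortdec by metis
      then have len: "length \<beta> = length \<gamma>" by (metis size_mset)
      have inj: "inj_on f {..<length \<beta>}" by (rule f_inj[OF posg len f1 f2])
      have H: "\<forall>p\<in>{1..n}. \<forall>q\<in>{1..n}. cnt (LRM' n w) (w p) = cnt (LRM' n w) (w q) \<longleftrightarrow> cnt (LRM' n u) (u p) = cnt (LRM' n u) (u q)"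
      proof (intro ballI)
        fix p q assume p: "p \<in> {1..n}" and q: "q \<in> {1..n}"
        have wp: "w p \<in> {1..n}" and wq: "w q \<in> {1..n}" using permutes_in_image[OF w] p q by auto
        have fp: "cnt (LRM' n u) (u p) = f (cnt (LRM' n w) (w p))" using f3 wp igw sb sg by metis
        have fq: "cnt (LRM' n u) (u q) = f (cnt (LRM' n w) (w q))" using f3 wq igw sb sg by metis
        have lp: "cnt (LRM' n w) (w p) \<in> {..<length \<beta>}" using cnt_lt[OF posb] wp nb sb by simp
        have lq: "cnt (LRM' n w) (w q) \<in> {..<length \<beta>}" using cnt_lt[OF posb] wq nb sb by simp
        show "cnt (LRM' n w) (w p) = cnt (LRM' n w) (w q) \<longleftrightarrow> cnt (LRM' n u) (u p) = cnt (LRM' n u) (u q)"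
          using inj_onD[OF inj _ lp lq] fp fq by auto
      qed
      have "(\<Sum>L\<in>Pow (NN \<beta>). if Good n \<beta> (SetC \<gamma>) g L then (-1)^card L else (0::'k)) = 0"
      proof (rule sum.neutral, intro ballI)
        fix L assume L: "L \<in> Pow (NN \<beta>)"
        have "\<not> Good n \<beta> (SetC \<gamma>) g L"
        proof
          assume "Good n \<beta> (SetC \<gamma>) g L"
          then have "Good n \<beta> (LRM' n u) (w \<circ> inv u) L" using sg by (simp add: g_def)
          then have "u = w" using final_eq[OF w u posb nb sb _ H] L by blast
          then show False using uw by simp
        qed
        then show "(if Good n \<beta> (SetC \<gamma>) g L then (-1)^card L else (0::'k)) = 0" by simp
      qed
      then show ?thesis unfolding coef .
    qed
  qed
  show ?thesis using A B by blast
qed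


end
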